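(* Let $\Omega$ consist of all continuous functions $g:\mathbb R^p\to\mathbb R$, for all $p\ge1$. For $d\ge1$, $t\ge0$, $k\ge1$: (1) if $\mathcal F$ is the set of all functions $\mathcal G_1\to\mathbb R^m$ ($m\ge1$) represented in $\mathsf{GTL}_2^{(t)}(\Omega)$, then $\overline{\mathcal F_d}=\{f\in C(\mathcal G_1,\mathbb R^d):\rho_1(\mathsf{cr}^{(t)})\subseteq\rho_1(f)\}$; (2) if $\mathcal F$ is the set of all functions $\mathcal G_1\to\mathbb R^m$ represented in $\mathsf{TL}_{k+1}^{(t)}(\Omega)$, then $\overline{\mathcal F_d}=\{f\in C(\mathcal G_1,\mathbb R^d):\rho_1(\mathsf{vwl}_k^{(t)})\subseteq\rho_1(f)\}$; (3) if $\mathcal F$ is the set of all functions $\mathcal G_0\to\mathbb R^m$ represented in $\mathsf{TL}_2^{(t+1)}(\Omega)$, then $\overline{\mathcal F_d}=\{f\in C(\mathcal G_0,\mathbb R^d):\rho_0(\mathsf{gwl}_1^{(t)})\subseteq\rho_0(f)\}$; (4) if $\mathcal F$ is the set of all functions $\mathcal G_0\to\mathbb R^m$ represented in $\mathsf{TL}_{k+1}(\Omega)$, then $\overline{\mathcal F_d}=\{f\in C(\mathcal G_0,\mathbb R^d):\rho_0(\mathsf{gwl}_k^{(\infty)})\subseteq\rho_0(f)\}$.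
   Context: Fix integers $n\ge1$, $\ell\ge1$ and a compact set $K\subseteq\mathbb R^\ell$. A graph is $G=(V_G,E_G,\mathrm{col}_G)$ with $V_G=[n]$, $E_G$ a set of unordered pairs of distinct vertices, and $\mathrm{col}_G:V_G\to K$; $N_G(v)=\{u:uv\in E_G\}$. $\mathcal G_0$ is the set of such graphs and $\mathcal G_s=\{(G,\mathbf v):\mathbf v\in V_G^s\}$, topologized as a compact subset of $\{0,1\}^{n\times n}\times K^n\times[n]^s$. $C(\mathcal G_s,\mathbb R^d)$: continuous functions. For a set $\mathcal F$ of functions on $\mathcal G_s$, $\mathcal F_d$ is its subset with codomain $\mathbb R^d$ and $\overline{\mathcal F_d}$ the set of $h\in C(\mathcal G_s,\mathbb R^d)$ that are uniform limits (sup over $\mathcal G_s$) of sequences from $\mathcal F_d$. $\rho_s(f)=\{((G,\mathbf v),(H,\mathbf w)):f(G,\mathbf v)=f(H,\mathbf w)\}$. Tensor language: expressions $\varphi::=\mathbf 1_{x=y}\mid \mathbf 1_{x\neq y}\mid E(x,y)\mid P_s(x)\mid \varphi\cdot\varphi\mid \varphi+\varphi\mid a\cdot\varphi\mid g(\varphi_1,\dots,\varphi_p)\mid \sum_x\varphi$ ($g\in\Omega$ of arity $p$), usual free variables ($\sum_x$ binds $x$), semantics: $E$ is the adjacency indicator, $P_s(x)$ is $\mathrm{col}_G(\nu(x))_s$, $\mathbf 1_{x\,\mathrm{op}\,y}$ the (dis)equality indicator, $\cdot,+,a\cdot,g$ pointwise, $\sum_x$ sums over $V_G$. Summation depth: $0$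 for atoms, max for $\cdot,+,g(\dots)$, $+1$ for $\sum_x$. $\mathsf{TL}_k(\Omega)$: expressions using only variables $x_1,\dots,x_k$ (re-binding allowed); $\mathsf{TL}_k^{(t)}(\Omega)$: those of summation depth $\le t$. Guarded fragment $\mathsf{GTL}_2(\Omega)$: expressions with exactly one free variable ($x_1$ or $x_2$), built from $\mathbf 1_{x_i=x_i}$, $\mathbf 1_{x_i\ne x_i}$, $P_s(x_i)$ by $\cdot$ and $+$ of expressions with the same single free variable, $a\cdot$, $g(\varphi_1,\dots,\varphi_p)$ with all $\varphi_j$ having the same single free variable, and $\sum_{x_j}(E(x_i,x_j)\cdot\varphi)$ with $\{i,j\}=\{1,2\}$ and $\varphi$ having free variable $x_j$; $\mathsf{GTL}_2^{(t)}(\Omega)$ its subset of summation depth $\le t$. A function $f:\mathcal G_s\to\mathbb R^m$ is represented in a fragment $\mathcal L$ if there are $\varphi_1,\dots,\varphi_m\in\mathcal L$ with free variables among $x_1,\dots,x_s$ and $f(G,\mathbf v)=([\![\varphi_1]\!]^{\mathbf v}_G,\dots,[\![\varphi_m]\!]^{\mathbf v}_G)$. Color refinement: $\mathsf{cr}^{(0)}(G,v)=\mathrm{col}_G(v)$, $\mathsf{cr}^{(t+1)}(G,v)=(\mathsf{cr}^{(t)}(G,v),\{\!\{\mathsf{cr}^{(t)}(G,u):u\in N_G(v)\}\!\})$. $k$-WL: $\mathsf{atp}_k(G,\mathbf v)$ records for $i<j$ whether $v_i=v_j$ and whether $v_iv_j\in E_G$, and all $\mathrm{col}_G(v_i)$;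 $\mathsf{wl}_k^{(0)}=\mathsf{atp}_k$, $\mathsf{wl}_k^{(t+1)}(G,\mathbf v)=(\mathsf{wl}_k^{(t)}(G,\mathbf v),\{\!\{(\mathsf{atp}_{k+1}(G,(v_1,\dots,v_k,u)),\mathsf{wl}_k^{(t)}(G,\mathbf v[u/1]),\dots,\mathsf{wl}_k^{(t)}(G,\mathbf v[u/k])):u\in V_G\}\!\})$; $\mathsf{vwl}_k^{(t)}(G,v)=\mathsf{wl}_k^{(t)}(G,(v,\dots,v))$; $\mathsf{gwl}_k^{(t)}(G)=\{\!\{\mathsf{wl}_k^{(t)}(G,\mathbf v):\mathbf v\in V_G^k\}\!\}$. Labels compared as formal objects; $\rho_s(\mathsf{alg})$ is the set of pairs with equal labels; $\rho_0(\mathsf{gwl}_k^{(\infty)})=\bigcap_t\rho_0(\mathsf{gwl}_k^{(t)})$. *)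

theory Defs
  imports "HOL-Analysis.Analysis" "HOL-Library.Multiset"
begin

text \<open>Vertex set [n] is the finite type 'n (n = CARD('n) >= 1); colours live in real^'l
  (ell = CARD('l) >= 1). A graph is a pair (adjacency, colouring).\<close>

type_synonym ('n,'l) graph = "('n \<Rightarrow> 'n \<Rightarrow> bool) \<times> ((real^'l)^'n)"

definition adjG :: "('n::finite,'l::finite) graph \<Rightarrow> 'n \<Rightarrow> 'n \<Rightarrow> bool" where
  "adjG G = fst G"

definition colG :: "('n::finite,'l::finite) graph \<Rightarrow> 'n \<Rightarrow> real^'l" where
  "colG G v = snd G $ v"

definition is_graph :: "(real^'l) set \<Rightarrow> ('n::finite,'l::finite) graph \<Rightarrow> bool" where
  "is_graph K G \<longleftrightarrow> (\<forall>u v. adjG G u v = adjG G v u) \<and> (\<forall>v. \<not> adjG G v v)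
      \<and> (\<forall>v. colG G v \<in> K)"

text \<open>Continuity on G_0 and G_1: the adjacency and vertex components are discrete,
  so continuity means continuity in the colouring for every fixed discrete part.\<close>

definition cont0 :: "(real^'l) set \<Rightarrow> (('n::finite,'l::finite) graph \<Rightarrow> real^'d) \<Rightarrow> bool" where
  "cont0 K f \<longleftrightarrow> (\<forall>A. continuous_on {c. is_graph K (A,c)} (\<lambda>c. f (A,c)))"

definition cont1 :: "(real^'l) set \<Rightarrow> (('n::finite,'l::finite) graph \<times> 'n \<Rightarrow> real^'d) \<Rightarrow> bool" where
  "cont1 K f \<longleftrightarrow> (\<forall>A v. continuous_on {c. is_graph K (A,c)} (\<lambda>c. f ((A,c),v)))"

definition uclos0 :: "(real^'l) set \<Rightarrow> (('n::finite,'l::finite) graph \<Rightarrow> real^'d) set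
    \<Rightarrow> (('n,'l) graph \<Rightarrow> real^'d) set" where
  "uclos0 K F = {h. cont0 K h \<and> (\<exists>S. (\<forall>j. S j \<in> F) \<and>
      uniform_limit {G. is_graph K G} S h sequentially)}"

definition uclos1 :: "(real^'l) set \<Rightarrow> (('n::finite,'l::finite) graph \<times> 'n \<Rightarrow> real^'d) set
    \<Rightarrow> (('n,'l) graph \<times> 'n \<Rightarrow> real^'d) set" where
  "uclos1 K F = {h. cont1 K h \<and> (\<exists>S. (\<forall>j. S j \<in> F) \<and>
      uniform_limit {x. is_graph K (fst x)} S h sequentially)}"

text \<open>Variables x_i are indexed by naturals i (x_1, x_2, ...). Function applications carry
  the function g itself (acting on the list of argument values).\<close>

datatype 'l tl =
    EqI nat nat | NeqI nat nat | Edge nat nat | Pcol 'l nat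
  | Mul "'l tl" "'l tl" | Add "'l tl" "'l tl" | Scale real "'l tl"
  | App "real list \<Rightarrow> real" "'l tl list" | Sum nat "'l tl"

fun sem :: "('n::finite,'l::finite) graph \<Rightarrow> (nat \<Rightarrow> 'n) \<Rightarrow> 'l tl \<Rightarrow> real" where
  "sem G \<nu> (EqI i j) = (if \<nu> i = \<nu> j then 1 else 0)"
| "sem G \<nu> (NeqI i j) = (if \<nu> i \<noteq> \<nu> j then 1 else 0)"
| "sem G \<nu> (Edge i j) = (if adjG G (\<nu> i) (\<nu> j) then 1 else 0)"
| "sem G \<nu> (Pcol s i) = colG G (\<nu> i) $ s"
| "sem G \<nu> (Mul a b) = sem G \<nu> a * sem G \<nu> b"
| "sem G \<nu> (Add a b) = sem G \<nu> a + sem G \<nu> b"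
| "sem G \<nu> (Scale c a) = c * sem G \<nu> a"
| "sem G \<nu> (App g as) = g (map (sem G \<nu>) as)"
| "sem G \<nu> (Sum i a) = (\<Sum>u\<in>UNIV. sem G (\<nu>(i := u)) a)"

fun fv :: "'l tl \<Rightarrow> nat set" where
  "fv (EqI i j) = {i, j}"
| "fv (NeqI i j) = {i, j}"
| "fv (Edge i j) = {i, j}"
| "fv (Pcol s i) = {i}"
| "fv (Mul a b) = fv a \<union> fv b"
| "fv (Add a b) = fv a \<union> fv b"
| "fv (Scale c a) = fv a"
| "fv (App g as) = (\<Union>a\<in>set as. fv a)"
| "fv (Sum i a) = fv a - {i}"

fun vars :: "'l tl \<Rightarrow> nat set" where
  "vars (EqI i j) = {i, j}"
| "vars (NeqI i j) = {i, j}"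
| "vars (Edge i j) = {i, j}"
| "vars (Pcol s i) = {i}"
| "vars (Mul a b) = vars a \<union> vars b"
| "vars (Add a b) = vars a \<union> vars b"
| "vars (Scale c a) = vars a"
| "vars (App g as) = (\<Union>a\<in>set as. vars a)"
| "vars (Sum i a) = insert i (vars a)"

fun sdepth :: "'l tl \<Rightarrow> nat" where
  "sdepth (EqI i j) = 0"
| "sdepth (NeqI i j) = 0"
| "sdepth (Edge i j) = 0"
| "sdepth (Pcol s i) = 0"
| "sdepth (Mul a b) = max (sdepth a) (sdepth b)"
| "sdepth (Add a b) = max (sdepth a) (sdepth b)"
| "sdepth (Scale c a) = sdepth a"
| "sdepth (App g as) = Max (insert 0 (set (map sdepth as)))"
| "sdepth (Sum i a) = Suc (sdepth a)"

text \<open>Omega = all continuous g : R^p -> R, p >= 1. A function g on lists is used at arity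
  p = number of arguments; continuity on R^p (Euclidean metric) written out.\<close>

definition cont_arity :: "nat \<Rightarrow> (real list \<Rightarrow> real) \<Rightarrow> bool" where
  "cont_arity p g \<longleftrightarrow> (\<forall>x. length x = p \<longrightarrow> (\<forall>e>0. \<exists>\<delta>>0. \<forall>y. length y = p \<and>
       sqrt (\<Sum>i<p. (x ! i - y ! i)\<^sup>2) < \<delta> \<longrightarrow> \<bar>g y - g x\<bar> < e))"

fun omega_ok :: "'l tl \<Rightarrow> bool" where
  "omega_ok (Mul a b) = (omega_ok a \<and> omega_ok b)"
| "omega_ok (Add a b) = (omega_ok a \<and> omega_ok b)"
| "omega_ok (Scale c a) = omega_ok a"
| "omega_ok (App g as) = (as \<noteq> [] \<and> cont_arity (length as) g \<and> (\<forall>a\<in>set as. omega_ok a))"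
| "omega_ok (Sum i a) = omega_ok a"
| "omega_ok _ = True"

definition TL :: "nat \<Rightarrow> 'l tl set" where
  "TL k = {\<phi>. vars \<phi> \<subseteq> {1..k} \<and> omega_ok \<phi>}"

definition TLt :: "nat \<Rightarrow> nat \<Rightarrow> 'l tl set" where
  "TLt k t = {\<phi>. \<phi> \<in> TL k \<and> sdepth \<phi> \<le> t}"

text \<open>Guarded fragment: gtl i phi means phi is guarded with the single free variable x_i.\<close>
inductive gtl :: "nat \<Rightarrow> 'l tl \<Rightarrow> bool" where
  g_eq: "i \<in> {1,2} \<Longrightarrow> gtl i (EqI i i)"
| g_neq: "i \<in> {1,2} \<Longrightarrow> gtl i (NeqI i i)"
| g_col: "i \<in> {1,2} \<Longrightarrow> gtl i (Pcol s i)"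
| g_mul: "gtl i a \<Longrightarrow> gtl i b \<Longrightarrow> gtl i (Mul a b)"
| g_add: "gtl i a \<Longrightarrow> gtl i b \<Longrightarrow> gtl i (Add a b)"
| g_scale: "gtl i a \<Longrightarrow> gtl i (Scale c a)"
| g_app: "as \<noteq> [] \<Longrightarrow> (\<forall>a\<in>set as. gtl i a) \<Longrightarrow> gtl i (App g as)"
| g_sum: "{i, j} = {1, 2} \<Longrightarrow> gtl j a \<Longrightarrow> gtl i (Sum j (Mul (Edge i j) a))"

definition GTL2 :: "'l tl set" where
  "GTL2 = {\<phi>. (\<exists>i. gtl i \<phi>) \<and> omega_ok \<phi>}"

definition GTL2t :: "nat \<Rightarrow> 'l tl set" where
  "GTL2t t = {\<phi>. \<phi> \<in> GTL2 \<and> sdepth \<phi> \<le> t}"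

definition rep1 :: "(real^'l) set \<Rightarrow> 'l tl set \<Rightarrow> (('n::finite,'l::finite) graph \<times> 'n \<Rightarrow> real^'d) set" where
  "rep1 K L = {f. \<exists>\<phi> :: 'd \<Rightarrow> 'l tl. (\<forall>i. \<phi> i \<in> L \<and> fv (\<phi> i) \<subseteq> {1}) \<and>
      (\<forall>G v. is_graph K G \<longrightarrow> f (G, v) = (\<chi> i. sem G (\<lambda>_. v) (\<phi> i)))}"

definition rep0 :: "(real^'l) set \<Rightarrow> 'l tl set \<Rightarrow> (('n::finite,'l::finite) graph \<Rightarrow> real^'d) set" where
  "rep0 K L = {f. \<exists>\<phi> :: 'd \<Rightarrow> 'l tl. (\<forall>i. \<phi> i \<in> L \<and> fv (\<phi> i) = {}) \<and>
      (\<forall>G. is_graph K G \<longrightarrow> f G = (\<chi> i. sem G (\<lambda>_. undefined) (\<phi> i)))}"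

datatype 'c lab =
    LCol 'c
  | LAtp "(bool \<times> bool) list" "'c list"
  | LPair "'c lab" "'c lab multiset"
  | LTup "'c lab list"

fun cr :: "nat \<Rightarrow> ('n::finite,'l::finite) graph \<Rightarrow> 'n \<Rightarrow> (real^'l) lab" where
  "cr 0 G v = LCol (colG G v)"
| "cr (Suc t) G v = LPair (cr t G v) (image_mset (cr t G) (mset_set {u. adjG G v u}))"

definition atp :: "('n::finite,'l::finite) graph \<Rightarrow> 'n list \<Rightarrow> (real^'l) lab" where
  "atp G vs = LAtp
     (concat (map (\<lambda>i. map (\<lambda>j. (vs ! i = vs ! j, adjG G (vs ! i) (vs ! j))) [Suc i..<length vs])
        [0..<length vs]))
     (map (colG G) vs)"

fun wl :: "nat \<Rightarrow> nat \<Rightarrow> ('n::finite,'l::finite) graph \<Rightarrow> 'n list \<Rightarrow> (real^'l) lab" where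
  "wl k 0 G vs = atp G vs"
| "wl k (Suc t) G vs = LPair (wl k t G vs)
     (image_mset (\<lambda>u. LTup (atp G (vs @ [u]) # map (\<lambda>i. wl k t G (vs[i := u])) [0..<k]))
        (mset_set (UNIV :: 'n set)))"

definition vwl :: "nat \<Rightarrow> nat \<Rightarrow> ('n::finite,'l::finite) graph \<Rightarrow> 'n \<Rightarrow> (real^'l) lab" where
  "vwl k t G v = wl k t G (replicate k v)"

definition gwl :: "nat \<Rightarrow> nat \<Rightarrow> ('n::finite,'l::finite) graph \<Rightarrow> (real^'l) lab multiset" where
  "gwl k t G = image_mset (wl k t G) (mset_set {vs :: 'n list. length vs = k})"

definition rho1_sub :: "(real^'l) set \<Rightarrow> (('n::finite,'l::finite) graph \<Rightarrow> 'n \<Rightarrow> 'c)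
    \<Rightarrow> (('n,'l) graph \<times> 'n \<Rightarrow> 'b) \<Rightarrow> bool" where
  "rho1_sub K alg f \<longleftrightarrow> (\<forall>G v H w. is_graph K G \<and> is_graph K H \<and> alg G v = alg H w
      \<longrightarrow> f (G, v) = f (H, w))"

definition rho0_sub :: "(real^'l) set \<Rightarrow> (('n::finite,'l::finite) graph \<Rightarrow> 'c)
    \<Rightarrow> (('n,'l) graph \<Rightarrow> 'b) \<Rightarrow> bool" where
  "rho0_sub K alg f \<longleftrightarrow> (\<forall>G H. is_graph K G \<and> is_graph K H \<and> alg G = alg H
      \<longrightarrow> f G = f H)"

text \<open>gwl_k^(infinity): equal labels at every round.\<close>
definition rho0_sub_gwl_inf :: "(real^'l) set \<Rightarrow> nat \<Rightarrow> (('n::finite,'l::finite) graph \<Rightarrow> 'b) \<Rightarrow> bool" where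
  "rho0_sub_gwl_inf K k f \<longleftrightarrow> (\<forall>G H. is_graph K G \<and> is_graph K H \<and> (\<forall>t. gwl k t G = gwl k t H)
      \<longrightarrow> f G = f H)"

end

theory Submission
  imports Defs
begin


lemma sem_fv: "(\<forall>i\<in>fv \<phi>. \<nu> i = \<mu> i) \<Longrightarrow> sem G \<nu> \<phi> = sem G \<mu> \<phi>"
proof (induction \<phi> arbitrary: \<nu> \<mu>)
  case (App g as)
  have eq: "map (sem G \<nu>) as = map (sem G \<mu>) as"
  proof (rule map_cong[OF refl])
    fix x assume "x \<in> set as" then show "sem G \<nu> x = sem G \<mu> x"
      using App.prems by (intro App.IH) auto
  qed
  show ?case by (simp only: sem.simps eq)
next
  case (Sum j a)
  have "sem G (\<nu>(j := u)) a = sem G (\<mu>(j := u)) a" for u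
    using Sum.prems by (intro Sum.IH) auto
  then show ?case by simp
next
  case (Mul a b)
  have "sem G \<nu> a = sem G \<mu> a" "sem G \<nu> b = sem G \<mu> b"
    using Mul.prems by (intro Mul.IH; simp)+
  then show ?case by simp
next
  case (Add a b)
  have "sem G \<nu> a = sem G \<mu> a" "sem G \<nu> b = sem G \<mu> b"
    using Add.prems by (intro Add.IH; simp)+
  then show ?case by simp
next
  case (Scale c a)
  then show ?case by simp
qed simp_all

fun ren :: "(nat \<Rightarrow> nat) \<Rightarrow> 'l tl \<Rightarrow> 'l tl" where
  "ren \<sigma> (EqI i j) = EqI (\<sigma> i) (\<sigma> j)"
| "ren \<sigma> (NeqI i j) = NeqI (\<sigma> i) (\<sigma> j)"
| "ren \<sigma> (Edge i j) = Edge (\<sigma> i) (\<sigma> j)"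
| "ren \<sigma> (Pcol s i) = Pcol s (\<sigma> i)"
| "ren \<sigma> (Mul a b) = Mul (ren \<sigma> a) (ren \<sigma> b)"
| "ren \<sigma> (Add a b) = Add (ren \<sigma> a) (ren \<sigma> b)"
| "ren \<sigma> (Scale c a) = Scale c (ren \<sigma> a)"
| "ren \<sigma> (App g as) = App g (map (ren \<sigma>) as)"
| "ren \<sigma> (Sum i a) = Sum (\<sigma> i) (ren \<sigma> a)"

lemma sem_ren: "inj \<sigma> \<Longrightarrow> sem G \<nu> (ren \<sigma> \<phi>) = sem G (\<nu> \<circ> \<sigma>) \<phi>"
proof (induction \<phi> arbitrary: \<nu>)
  case (App g as)
  have eq: "map (sem G \<nu> \<circ> ren \<sigma>) as = map (sem G (\<nu> \<circ> \<sigma>)) as"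
  proof (rule map_cong[OF refl])
    fix x assume "x \<in> set as" then show "(sem G \<nu> \<circ> ren \<sigma>) x = sem G (\<nu> \<circ> \<sigma>) x"
      using App.prems App.IH by (simp add: o_def)
  qed
  show ?case by (simp only: sem.simps ren.simps map_map eq)
next
  case (Sum i a)
  have "(\<nu>(\<sigma> i := u)) \<circ> \<sigma> = (\<nu> \<circ> \<sigma>)(i := u)" for u
    using Sum.prems by (auto simp: fun_eq_iff inj_eq)
  then have "sem G (\<nu>(\<sigma> i := u)) (ren \<sigma> a) = sem G ((\<nu> \<circ> \<sigma>)(i := u)) a" for u
    by (simp only: Sum.IH[OF Sum.prems, of "\<nu>(\<sigma> i := u)"])
  then show ?case by (simp add: o_def)
next
  case (Mul a b)
  then show ?case by simp
next
  case (Add a b)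
  then show ?case by simp
next
  case (Scale c a)
  then show ?case by simp
qed simp_all

lemma fv_ren: "inj \<sigma> \<Longrightarrow> fv (ren \<sigma> \<phi>) = \<sigma> ` fv \<phi>"
  by (induction \<phi>) (auto simp: inj_eq)

lemma vars_ren: "vars (ren \<sigma> \<phi>) = \<sigma> ` vars \<phi>"
  by (induction \<phi>) auto

lemma sdepth_ren: "sdepth (ren \<sigma> \<phi>) = sdepth \<phi>"
proof (induction \<phi>)
  case (App g as)
  have "map (sdepth \<circ> ren \<sigma>) as = map sdepth as" 
    by (rule map_cong[OF refl]) (simp add: App.IH)
  then show ?case by simp
qed simp_all

lemma omega_ok_ren: "omega_ok (ren \<sigma> \<phi>) = omega_ok \<phi>"
  by (induction \<phi>) auto

definition sw :: "nat \<Rightarrow> nat \<Rightarrow> nat \<Rightarrow> nat" where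
  "sw a b x = (if x = a then b else if x = b then a else x)"

lemma inj_sw: "inj (sw a b)"
  by (auto simp: inj_def sw_def split: if_splits)

lemma sw_simps[simp]: "sw a b a = b" "sw a b b = a" "x \<noteq> a \<Longrightarrow> x \<noteq> b \<Longrightarrow> sw a b x = x"
  by (auto simp: sw_def)

lemma abs_le_sqrt_sum:
  fixes x y :: "real list"
  assumes "i < p"
  shows "\<bar>x ! i - y ! i\<bar> \<le> sqrt (\<Sum>j<p. (x ! j - y ! j)\<^sup>2)"
proof -
  have "(x ! i - y ! i)\<^sup>2 \<le> (\<Sum>j<p. (x ! j - y ! j)\<^sup>2)"
    using assms by (intro member_le_sum) auto
  then show ?thesis using real_sqrt_le_mono by fastforce
qed

lemma lipschitz_cont_arity:
  assumes L: "L \<ge> 0" and lip: "\<And>x y. length x = p \<Longrightarrow> length y = p \<Longrightarrow>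
      \<bar>g y - g x\<bar> \<le> L * (\<Sum>i<p. \<bar>x ! i - y ! i\<bar>)"
  shows "cont_arity p g"
  unfolding cont_arity_def
proof (intro allI impI)
  fix x :: "real list" and e :: real
  assume x: "length x = p" and e: "e > 0"
  define \<delta> where "\<delta> = e / (L * real p + 1)"
  have dpos: "\<delta> > 0" using e L unfolding \<delta>_def by (simp add: add_nonneg_pos)
  show "\<exists>\<delta>>0. \<forall>y. length y = p \<and> sqrt (\<Sum>i<p. (x ! i - y ! i)\<^sup>2) < \<delta> \<longrightarrow> \<bar>g y - g x\<bar> < e"
  proof (intro exI[of _ \<delta>] conjI allI impI dpos)
    fix y :: "real list"
    assume y: "length y = p \<and> sqrt (\<Sum>i<p. (x ! i - y ! i)\<^sup>2) < \<delta>"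
    have "(\<Sum>i<p. \<bar>x ! i - y ! i\<bar>) \<le> (\<Sum>i<p. \<delta>)"
      by (intro sum_mono) (use abs_le_sqrt_sum[of _ p x y] y in fastforce)
    then have s: "(\<Sum>i<p. \<bar>x ! i - y ! i\<bar>) \<le> real p * \<delta>" by simp
    have "\<bar>g y - g x\<bar> \<le> L * (\<Sum>i<p. \<bar>x ! i - y ! i\<bar>)"
      using lip[OF x] y by blast
    also have "\<dots> \<le> L * (real p * \<delta>)"
      using s L by (rule mult_left_mono)
    also have "\<dots> < e"
    proof -
      have d: "L * real p + 1 > 0" using L by (simp add: add_nonneg_pos)
      have eq: "L * (real p * \<delta>) * (L * real p + 1) = e * (L * real p)"
        unfolding \<delta>_def using d by (simp add: field_simps)
      have "L * (real p * \<delta>) * (L * real p + 1) < e * (L * real p + 1)"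
        unfolding eq using e by (simp add: algebra_simps)
      then show ?thesis using d by (meson less_le mult_right_less_imp_less)
    qed
    finally show "\<bar>g y - g x\<bar> < e" .
  qed
qed


lemma isCont_app:
  fixes F :: "'a \<Rightarrow> 'c::metric_space \<Rightarrow> real"
  assumes g: "cont_arity (length as) g" and F: "\<And>a. a \<in> set as \<Longrightarrow> isCont (F a) c0"
  shows "isCont (\<lambda>c. g (map (\<lambda>a. F a c) as)) c0"
proof -
  let ?p = "length as"
  let ?x = "map (\<lambda>a. F a c0) as"
  have Fi: "((F (as ! i)) \<longlongrightarrow> F (as ! i) c0) (at c0)" if "i < ?p" for i
    using F[of "as ! i"] that by (simp add: isCont_def)
  have T: "((\<lambda>c. \<Sum>i<?p. \<bar>F (as!i) c - F (as!i) c0\<bar>) \<longlongrightarrow> (\<Sum>i<?p. \<bar>F (as!i) c0 - F (as!i) c0\<bar>)) (at c0)"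
    by (intro tendsto_sum tendsto_rabs tendsto_diff Fi tendsto_const) simp
  then have T0: "((\<lambda>c. \<Sum>i<?p. \<bar>F (as!i) c - F (as!i) c0\<bar>) \<longlongrightarrow> 0) (at c0)" by simp
  show ?thesis unfolding isCont_def tendsto_iff
  proof (intro allI impI)
    fix e :: real assume e: "e > 0"
    obtain \<delta> where \<delta>: "\<delta> > 0" "\<forall>y. length y = ?p \<and> sqrt (\<Sum>i<?p. (?x ! i - y ! i)\<^sup>2) < \<delta> \<longrightarrow> \<bar>g y - g ?x\<bar> < e"
      using g[unfolded cont_arity_def, rule_format, of ?x e] e by auto
    have ev: "eventually (\<lambda>c. (\<Sum>i<?p. \<bar>F (as!i) c - F (as!i) c0\<bar>) < \<delta>) (at c0)"
      using order_tendstoD(2)[OF T0 \<delta>(1)] .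
    then show "eventually (\<lambda>c. dist (g (map (\<lambda>a. F a c) as)) (g ?x) < e) (at c0)"
    proof (rule eventually_mono)
      fix c assume c: "(\<Sum>i<?p. \<bar>F (as!i) c - F (as!i) c0\<bar>) < \<delta>"
      let ?y = "map (\<lambda>a. F a c) as"
      have "sqrt (\<Sum>i<?p. (?x!i - ?y!i)\<^sup>2) \<le> (\<Sum>i<?p. \<bar>?x!i - ?y!i\<bar>)"
        using L2_set_le_sum_abs[of "\<lambda>i. ?x!i - ?y!i" "{..<?p}"] by (simp add: L2_set_def)
      also have "\<dots> = (\<Sum>i<?p. \<bar>F (as!i) c - F (as!i) c0\<bar>)"
        by (intro sum.cong) (auto simp: abs_minus_commute)
      finally have "sqrt (\<Sum>i<?p. (?x!i - ?y!i)\<^sup>2) < \<delta>" using c by linarith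
      then have "\<bar>g ?y - g ?x\<bar> < e" using \<delta>(2) by auto
      then show "dist (g ?y) (g ?x) < e" by (simp add: dist_real_def)
    qed
  qed
qed

lemma sem_isCont: "omega_ok \<phi> \<Longrightarrow> isCont (\<lambda>c. sem (A, c) \<nu> \<phi>) c0"
proof (induction \<phi> arbitrary: \<nu>)
  case (EqI i j) show ?case by simp
next
  case (NeqI i j) show ?case by simp
next
  case (Edge i j) show ?case by (simp add: adjG_def)
next
  case (Pcol s i) show ?case by (simp add: colG_def)
next
  case (Mul a b) then show ?case by (simp add: isCont_mult)
next
  case (Add a b) then show ?case by (simp add: isCont_add)
next
  case (Scale c a) then show ?case by (simp add: isCont_mult)
next
  case (App g as)
  have "isCont (\<lambda>c. g (map (\<lambda>a. sem (A, c) \<nu> a) as)) c0"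
    by (rule isCont_app) (use App in auto)
  then show ?case by simp
next
  case (Sum i a)
  have "isCont (\<lambda>c. sem (A, c) (\<nu>(i := u)) a) c0" for u
    using Sum by simp
  then show ?case by simp
qed

lemma sem_cont_on: "omega_ok \<phi> \<Longrightarrow> continuous_on S (\<lambda>c. sem (A, c) \<nu> \<phi>)"
  by (intro continuous_at_imp_continuous_on ballI sem_isCont)

lemma is_graph_iff: "is_graph K (A, c) \<longleftrightarrow> (\<forall>u v. A u v = A v u) \<and> (\<forall>v. \<not> A v v) \<and> (\<forall>v. c $ v \<in> K)"
  by (simp add: is_graph_def adjG_def colG_def)

lemma compact_SA:
  fixes K :: "(real^'l::finite) set"
  assumes K: "compact K"
  shows "compact {c :: (real^'l)^'n::finite. is_graph K (A, c)}"
proof (cases "(\<forall>u v. A u v = A v u) \<and> (\<forall>v. \<not> A v v)")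
  case False
  then have "{c :: (real^'l)^'n. is_graph K (A, c)} = {}" by (auto simp: is_graph_iff)
  then show ?thesis by simp
next
  case True
  then have eq: "{c :: (real^'l)^'n. is_graph K (A, c)} = (\<Inter>v. (\<lambda>c. c $ v) -` K)"
    by (auto simp: is_graph_iff)
  have cl: "closed (\<Inter>v. (\<lambda>c::(real^'l)^'n. c $ v) -` K)"
    using compact_imp_closed[OF K] by (intro closed_INT ballI closed_vimage_vec_nth)
  obtain B where B: "\<forall>x\<in>K. norm x \<le> B"
    using compact_imp_bounded[OF K] by (auto simp: bounded_iff)
  have "norm c \<le> real CARD('n) * B" if "c \<in> (\<Inter>v. (\<lambda>c::(real^'l)^'n. c $ v) -` K)" for c
  proof -
    have "norm c \<le> (\<Sum>v\<in>UNIV. norm (c $ v))"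
      unfolding norm_vec_def by (rule L2_set_le_sum) simp
    also have "\<dots> \<le> (\<Sum>v\<in>(UNIV::'n set). B)"
      using that B by (intro sum_mono) auto
    finally show ?thesis by simp
  qed
  then have "bounded (\<Inter>v. (\<lambda>c::(real^'l)^'n. c $ v) -` K)"
    unfolding bounded_iff by blast
  then show ?thesis unfolding eq using cl by (simp add: compact_eq_bounded_closed)
qed

lemma cover0:
  fixes K :: "(real^'l::finite) set" and H :: "('n::finite,'l) graph \<Rightarrow> ('n,'l) graph \<Rightarrow> real"
  assumes K: "compact K"
    and H: "\<forall>y\<in>{G. is_graph K G}. H y y > 0 \<and> (\<forall>A. continuous_on {c. is_graph K (A,c)} (\<lambda>c. H y (A,c)))"
  shows "\<exists>Y. finite Y \<and> Y \<subseteq> {G. is_graph K G} \<and> (\<forall>x\<in>{G. is_graph K G}. \<exists>y\<in>Y. H y x > 0)"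
proof -
  have "\<exists>C. finite C \<and> C \<subseteq> {c. is_graph K (A,c)} \<and> (\<forall>c'\<in>{c. is_graph K (A,c)}. \<exists>c\<in>C. H (A,c) (A,c') > 0)" for A
  proof -
    let ?S = "{c :: (real^'l)^'n. is_graph K (A,c)}"
    have "\<exists>d>0. \<forall>c'\<in>?S. dist c' c < d \<longrightarrow> H (A,c) (A,c') > 0" if c: "c \<in> ?S" for c
    proof -
      have pos: "H (A,c) (A,c) > 0" and co: "continuous_on ?S (\<lambda>c'. H (A,c) (A,c'))"
        using H c by auto
      obtain d where d: "d > 0" "\<forall>c'\<in>?S. dist c' c < d \<longrightarrow> dist (H (A,c) (A,c')) (H (A,c) (A,c)) < H (A,c) (A,c)"
        using co[unfolded continuous_on_iff] c pos by metis
      show ?thesis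
        using d by (intro exI[of _ d]) (auto simp: dist_real_def)
    qed
    then obtain d where d: "\<forall>c\<in>?S. d c > 0 \<and> (\<forall>c'\<in>?S. dist c' c < d c \<longrightarrow> H (A,c) (A,c') > 0)"
      by metis
    have "?S \<subseteq> (\<Union>c\<in>?S. ball c (d c))"
      using d by (auto intro!: bexI)
    then obtain C where C: "C \<subseteq> ?S" "finite C" "?S \<subseteq> (\<Union>c\<in>C. ball c (d c))"
      using compactE_image[OF compact_SA[OF K], of ?S "\<lambda>c. ball c (d c)"] by auto
    show ?thesis
    proof (intro exI[of _ C] conjI C(1,2) ballI)
      fix c' assume c': "c' \<in> ?S"
      then obtain c where c: "c \<in> C" "c' \<in> ball c (d c)" using C(3) by blast
      then show "\<exists>c\<in>C. H (A,c) (A,c') > 0"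
        using d C(1) c' by (intro bexI[OF _ c(1)]) (auto simp: dist_commute)
    qed
  qed
  then obtain C where C: "\<forall>A. finite (C A) \<and> C A \<subseteq> {c. is_graph K (A,c)} \<and> (\<forall>c'\<in>{c. is_graph K (A,c)}. \<exists>c\<in>C A. H (A,c) (A,c') > 0)"
    by metis
  define Y where "Y = (\<Union>A. (\<lambda>c. (A,c)) ` C A)"
  have "finite Y" unfolding Y_def using C by auto
  moreover have "Y \<subseteq> {G. is_graph K G}" unfolding Y_def using C by auto
  moreover have "\<exists>y\<in>Y. H y x > 0" if "x \<in> {G. is_graph K G}" for x
  proof -
    obtain A c where x: "x = (A,c)" by fastforce
    then have "c \<in> {c. is_graph K (A,c)}" using that by simp
    then obtain c0 where "c0 \<in> C A" "H (A,c0) (A,c) > 0" using C by blast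
    then show ?thesis unfolding Y_def x by blast
  qed
  ultimately show ?thesis by blast
qed

lemma cover1:
  fixes K :: "(real^'l::finite) set" and H :: "('n::finite,'l) graph \<times> 'n \<Rightarrow> ('n,'l) graph \<times> 'n \<Rightarrow> real"
  assumes K: "compact K"
    and H: "\<forall>y\<in>{x. is_graph K (fst x)}. H y y > 0 \<and> (\<forall>A v. continuous_on {c. is_graph K (A,c)} (\<lambda>c. H y ((A,c),v)))"
  shows "\<exists>Y. finite Y \<and> Y \<subseteq> {x. is_graph K (fst x)} \<and> (\<forall>x\<in>{x. is_graph K (fst x)}. \<exists>y\<in>Y. H y x > 0)"
proof -
  have "\<exists>Y. finite Y \<and> Y \<subseteq> {G. is_graph K G} \<and> (\<forall>x\<in>{G. is_graph K G}. \<exists>y\<in>Y. H (y,v) (x,v) > 0)" for v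
    by (rule cover0[OF K]) (use H in auto)
  then obtain Y where Y: "\<forall>v. finite (Y v) \<and> Y v \<subseteq> {G. is_graph K G} \<and> (\<forall>x\<in>{G. is_graph K G}. \<exists>y\<in>Y v. H (y,v) (x,v) > 0)"
    by metis
  define Z where "Z = (\<Union>v. (\<lambda>y. (y,v)) ` Y v)"
  have "finite Z" unfolding Z_def using Y by auto
  moreover have "Z \<subseteq> {x. is_graph K (fst x)}" unfolding Z_def using Y by (force simp: subset_iff)
  moreover have "\<exists>y\<in>Z. H y x > 0" if "x \<in> {x. is_graph K (fst x)}" for x
  proof -
    obtain G v where x: "x = (G,v)" by fastforce
    have "is_graph K G" using that x by simp
    then obtain y where "y \<in> Y v" "H (y,v) (G,v) > 0" using Y by blast
    then show ?thesis unfolding Z_def x by blast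
  qed
  ultimately show ?thesis by blast
qed


lemma fin_min:
  fixes val :: "'f \<Rightarrow> 'p \<Rightarrow> real"
  assumes mn: "\<And>\<phi> \<psi>. \<phi> \<in> F \<Longrightarrow> \<psi> \<in> F \<Longrightarrow> \<exists>\<theta>\<in>F. \<forall>x\<in>X. val \<theta> x = min (val \<phi> x) (val \<psi> x)"
  shows "finite Y \<Longrightarrow> Y \<noteq> {} \<Longrightarrow> (\<forall>y\<in>Y. g y \<in> F) \<Longrightarrow>
     \<exists>\<theta>\<in>F. \<forall>x\<in>X. val \<theta> x = Min ((\<lambda>y. val (g y) x) ` Y)"
proof (induction Y rule: finite_ne_induct)
  case (singleton y) then show ?case by auto
next
  case (insert y Y)
  then obtain \<theta> where "\<theta> \<in> F" "\<forall>x\<in>X. val \<theta> x = Min ((\<lambda>y. val (g y) x) ` Y)" by auto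
  moreover obtain \<theta>' where "\<theta>' \<in> F" "\<forall>x\<in>X. val \<theta>' x = min (val (g y) x) (val \<theta> x)"
    using mn[of "g y" \<theta>] insert.prems calculation(1) by auto
  ultimately show ?case using insert.hyps by (intro bexI[of _ \<theta>']) auto
qed

lemma fin_max:
  fixes val :: "'f \<Rightarrow> 'p \<Rightarrow> real"
  assumes mx: "\<And>\<phi> \<psi>. \<phi> \<in> F \<Longrightarrow> \<psi> \<in> F \<Longrightarrow> \<exists>\<theta>\<in>F. \<forall>x\<in>X. val \<theta> x = max (val \<phi> x) (val \<psi> x)"
  shows "finite Y \<Longrightarrow> Y \<noteq> {} \<Longrightarrow> (\<forall>y\<in>Y. g y \<in> F) \<Longrightarrow>
     \<exists>\<theta>\<in>F. \<forall>x\<in>X. val \<theta> x = Max ((\<lambda>y. val (g y) x) ` Y)"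
proof (induction Y rule: finite_ne_induct)
  case (singleton y) then show ?case by auto
next
  case (insert y Y)
  then obtain \<theta> where "\<theta> \<in> F" "\<forall>x\<in>X. val \<theta> x = Max ((\<lambda>y. val (g y) x) ` Y)" by auto
  moreover obtain \<theta>' where "\<theta>' \<in> F" "\<forall>x\<in>X. val \<theta>' x = max (val (g y) x) (val \<theta> x)"
    using mx[of "g y" \<theta>] insert.prems calculation(1) by auto
  ultimately show ?case using insert.hyps by (intro bexI[of _ \<theta>']) auto
qed

lemma lattice_sw:
  fixes X :: "'p set" and val :: "'f \<Rightarrow> 'p \<Rightarrow> real" and F :: "'f set" and f :: "'p \<Rightarrow> real"
    and cc :: "('p \<Rightarrow> real) \<Rightarrow> bool"
  assumes cover: "\<And>H. \<forall>y\<in>X. H y y > 0 \<and> cc (H y) \<Longrightarrow> \<exists>Y. finite Y \<and> Y \<subseteq> X \<and> (\<forall>x\<in>X. \<exists>y\<in>Y. H y x > 0)"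
    and ccf: "cc f" and ccF: "\<And>\<phi>. \<phi> \<in> F \<Longrightarrow> cc (val \<phi>)"
    and cc_lin: "\<And>g h e. cc g \<Longrightarrow> cc h \<Longrightarrow> cc (\<lambda>x. g x - h x + e)"
    and const: "\<And>c. \<exists>\<phi>\<in>F. \<forall>x\<in>X. val \<phi> x = c"
    and aff: "\<And>\<phi> a b. \<phi> \<in> F \<Longrightarrow> \<exists>\<psi>\<in>F. \<forall>x\<in>X. val \<psi> x = a * val \<phi> x + b"
    and mx: "\<And>\<phi> \<psi>. \<phi> \<in> F \<Longrightarrow> \<psi> \<in> F \<Longrightarrow> \<exists>\<theta>\<in>F. \<forall>x\<in>X. val \<theta> x = max (val \<phi> x) (val \<psi> x)"
    and mn: "\<And>\<phi> \<psi>. \<phi> \<in> F \<Longrightarrow> \<psi> \<in> F \<Longrightarrow> \<exists>\<theta>\<in>F. \<forall>x\<in>X. val \<theta> x = min (val \<phi> x) (val \<psi> x)"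
    and sep: "\<And>x y. x \<in> X \<Longrightarrow> y \<in> X \<Longrightarrow> f x \<noteq> f y \<Longrightarrow> \<exists>\<phi>\<in>F. val \<phi> x \<noteq> val \<phi> y"
    and e: "e > 0"
  shows "\<exists>\<phi>\<in>F. \<forall>x\<in>X. \<bar>val \<phi> x - f x\<bar> < e"
proof -
  have interp: "\<exists>g\<in>F. val g x = f x \<and> val g y = f y" if x: "x \<in> X" and y: "y \<in> X" for x y
  proof (cases "f x = f y")
    case True
    then show ?thesis using const[of "f x"] x y by metis
  next
    case False
    then obtain \<phi> where \<phi>: "\<phi> \<in> F" "val \<phi> x \<noteq> val \<phi> y" using sep x y by blast
    define a where "a = (f x - f y) / (val \<phi> x - val \<phi> y)"
    define b where "b = f x - a * val \<phi> x"
    obtain \<psi> where \<psi>: "\<psi> \<in> F" "\<forall>z\<in>X. val \<psi> z = a * val \<phi> z + b" using aff[OF \<phi>(1)] by blast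
    have ad: "a * (val \<phi> x - val \<phi> y) = f x - f y"
      unfolding a_def using \<phi>(2) by simp
    have "a * val \<phi> y + b = f y"
      using ad unfolding b_def by (simp add: algebra_simps)
    moreover have "a * val \<phi> x + b = f x" unfolding b_def by simp
    ultimately show ?thesis using \<psi> x y by (intro bexI[of _ \<psi>]) auto
  qed
  show ?thesis
  proof (cases "X = {}")
    case True
    then show ?thesis using const[of 0] by auto
  next
    case Xne: False
    have step1: "\<exists>\<psi>\<in>F. val \<psi> x = f x \<and> (\<forall>z\<in>X. val \<psi> z < f z + e)" if x: "x \<in> X" for x
    proof -
      have "\<forall>y\<in>X. \<exists>g. g \<in> F \<and> val g x = f x \<and> val g y = f y"
        using interp[OF x] by blast
      then obtain g where g: "\<forall>y\<in>X. g y \<in> F \<and> val (g y) x = f x \<and> val (g y) y = f y"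
        by (rule bchoice[elim_format]) blast
      define H where "H y z = f z - val (g y) z + e" for y z
      have "\<forall>y\<in>X. H y y > 0 \<and> cc (H y)"
      proof
        fix y assume y: "y \<in> X"
        have 1: "H y y = e" using g y unfolding H_def by simp
        have "cc (val (g y))" using ccF g y by blast
        then have 2: "cc (H y)" unfolding H_def by (rule cc_lin[OF ccf])
        from 1 2 show "H y y > 0 \<and> cc (H y)" using e by simp
      qed
      then obtain Y where Y: "finite Y" "Y \<subseteq> X" "\<forall>z\<in>X. \<exists>y\<in>Y. H y z > 0"
        using cover[of H] by blast
      have Yne: "Y \<noteq> {}" using Y(3) x by auto
      obtain \<theta> where \<theta>: "\<theta> \<in> F" "\<forall>z\<in>X. val \<theta> z = Min ((\<lambda>y. val (g y) z) ` Y)"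
        using fin_min[OF mn Y(1) Yne, of g] g Y(2) by auto
      have "val \<theta> x = f x"
      proof -
        have "(\<lambda>y. val (g y) x) ` Y = {f x}" using g Y(2) Yne by force
        then show ?thesis using \<theta>(2) x by simp
      qed
      moreover have "val \<theta> z < f z + e" if z: "z \<in> X" for z
      proof -
        obtain y where y: "y \<in> Y" "H y z > 0" using Y(3) z by blast
        have "Min ((\<lambda>y. val (g y) z) ` Y) \<le> val (g y) z"
          using Y(1) y(1) by (intro Min_le) auto
        then show ?thesis using \<theta>(2) z y(2) unfolding H_def by auto
      qed
      ultimately show ?thesis using \<theta>(1) by blast
    qed
    obtain \<psi> where \<psi>: "\<forall>x\<in>X. \<psi> x \<in> F \<and> val (\<psi> x) x = f x \<and> (\<forall>z\<in>X. val (\<psi> x) z < f z + e)"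
    proof -
      have "\<forall>x\<in>X. \<exists>\<psi>. \<psi> \<in> F \<and> val \<psi> x = f x \<and> (\<forall>z\<in>X. val \<psi> z < f z + e)"
        using step1 by blast
      then show ?thesis using that by (metis bchoice)
    qed
    define H where "H x z = val (\<psi> x) z - f z + e" for x z
    have "\<forall>x\<in>X. H x x > 0 \<and> cc (H x)"
    proof
      fix x assume x: "x \<in> X"
      have 1: "H x x = e" using \<psi> x unfolding H_def by simp
      have "cc (val (\<psi> x))" using ccF \<psi> x by blast
      then have 2: "cc (H x)" unfolding H_def by (rule cc_lin[OF _ ccf])
      from 1 2 show "H x x > 0 \<and> cc (H x)" using e by simp
    qed
    then obtain W where W: "finite W" "W \<subseteq> X" "\<forall>z\<in>X. \<exists>x\<in>W. H x z > 0"
      using cover[of H] by blast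
    have Wne: "W \<noteq> {}" using W(3) Xne by auto
    obtain \<theta> where \<theta>: "\<theta> \<in> F" "\<forall>z\<in>X. val \<theta> z = Max ((\<lambda>x. val (\<psi> x) z) ` W)"
      using fin_max[OF mx W(1) Wne, of \<psi>] \<psi> W(2) by auto
    have "\<bar>val \<theta> z - f z\<bar> < e" if z: "z \<in> X" for z
    proof -
      obtain x where x: "x \<in> W" "H x z > 0" using W(3) z by blast
      have "val (\<psi> x) z \<le> Max ((\<lambda>x. val (\<psi> x) z) ` W)"
        using W(1) x(1) by (intro Max_ge) auto
      then have lo: "val \<theta> z > f z - e" using \<theta>(2) z x(2) unfolding H_def by auto
      have "Max ((\<lambda>x. val (\<psi> x) z) ` W) \<in> (\<lambda>x. val (\<psi> x) z) ` W"
        using W(1) Wne by (intro Max_in) auto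
      then obtain x' where "x' \<in> W" "val \<theta> z = val (\<psi> x') z" using \<theta>(2) z by auto
      then have hi: "val \<theta> z < f z + e" using \<psi> W(2) z by auto
      show ?thesis using lo hi by auto
    qed
    then show ?thesis using \<theta>(1) by blast
  qed
qed


lemma ca_const: "cont_arity p (\<lambda>_. c)"
  by (rule lipschitz_cont_arity[of 0]) auto

lemma ca_aff: "cont_arity (Suc 0) (\<lambda>xs. a * xs ! 0 + b)"
proof (rule lipschitz_cont_arity[of "\<bar>a\<bar>"])
  fix x y :: "real list"
  have "\<bar>a * y ! 0 + b - (a * x ! 0 + b)\<bar> = \<bar>a\<bar> * \<bar>x ! 0 - y ! 0\<bar>"
    by (simp add: abs_mult[symmetric] algebra_simps abs_minus_commute)
  then show "\<bar>a * y ! 0 + b - (a * x ! 0 + b)\<bar> \<le> \<bar>a\<bar> * (\<Sum>i<Suc 0. \<bar>x ! i - y ! i\<bar>)" by simp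
qed simp

lemma ca_max: "cont_arity (Suc (Suc 0)) (\<lambda>xs. max (xs ! 0) (xs ! Suc 0))"
proof (rule lipschitz_cont_arity[of 1])
  fix x y :: "real list"
  have s: "(\<Sum>i<Suc (Suc 0). \<bar>x ! i - y ! i\<bar>) = \<bar>x ! 0 - y ! 0\<bar> + \<bar>x ! Suc 0 - y ! Suc 0\<bar>"
    by (simp add: numeral_2_eq_2)
  show "\<bar>max (y ! 0) (y ! Suc 0) - max (x ! 0) (x ! Suc 0)\<bar> \<le> 1 * (\<Sum>i<Suc (Suc 0). \<bar>x ! i - y ! i\<bar>)"
    unfolding s by (simp add: max_def abs_if)
qed simp

lemma ca_min: "cont_arity (Suc (Suc 0)) (\<lambda>xs. min (xs ! 0) (xs ! Suc 0))"
proof (rule lipschitz_cont_arity[of 1])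
  fix x y :: "real list"
  have s: "(\<Sum>i<Suc (Suc 0). \<bar>x ! i - y ! i\<bar>) = \<bar>x ! 0 - y ! 0\<bar> + \<bar>x ! Suc 0 - y ! Suc 0\<bar>"
    by (simp add: numeral_2_eq_2)
  show "\<bar>min (y ! 0) (y ! Suc 0) - min (x ! 0) (x ! Suc 0)\<bar> \<le> 1 * (\<Sum>i<Suc (Suc 0). \<bar>x ! i - y ! i\<bar>)"
    unfolding s by (simp add: min_def abs_if)
qed simp

lemma seq_bound:
  fixes e :: real assumes e: "e > 0"
  shows "\<exists>N. \<forall>n\<ge>N. real CARD('d::finite) * inverse (real (Suc n)) < e"
proof -
  have c: "real CARD('d) > 0" by simp
  obtain N where N: "inverse (real (Suc N)) < e / real CARD('d)"
    using reals_Archimedean[of "e / real CARD('d)"] e c by auto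
  have "real CARD('d) * inverse (real (Suc n)) < e" if "n \<ge> N" for n
  proof -
    have "inverse (real (Suc n)) \<le> inverse (real (Suc N))"
      using that by (simp add: le_imp_inverse_le)
    then have "inverse (real (Suc n)) < e / real CARD('d)" using N by linarith
    then show ?thesis using c by (simp add: field_simps)
  qed
  then show ?thesis by blast
qed

lemma vec_dist_bound:
  fixes a b :: "real^'d::finite"
  assumes "\<forall>i. \<bar>a $ i - b $ i\<bar> < r"
  shows "dist a b < real CARD('d) * r"
proof -
  have "dist a b = norm (a - b)" by (simp add: dist_norm)
  also have "\<dots> \<le> (\<Sum>i\<in>UNIV. \<bar>(a - b) $ i\<bar>)" by (rule norm_le_l1_cart)
  also have "\<dots> < (\<Sum>i\<in>(UNIV::'d set). r)"
    using assms by (intro sum_strict_mono) auto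
  finally show ?thesis by simp
qed

lemma main1:
  fixes K :: "(real^'l::finite) set" and L :: "'l tl set" and alg :: "('n::finite,'l) graph \<Rightarrow> 'n \<Rightarrow> 'c"
  assumes K: "compact K"
    and base: "EqI 1 1 \<in> L"
    and app: "\<And>g as. as \<noteq> [] \<Longrightarrow> cont_arity (length as) g \<Longrightarrow> (\<forall>a\<in>set as. a \<in> L \<and> fv a \<subseteq> {1}) \<Longrightarrow> App g as \<in> L"
    and ok: "\<And>\<phi>. \<phi> \<in> L \<Longrightarrow> omega_ok \<phi>"
    and inv: "\<And>\<phi> G v H w. \<phi> \<in> L \<Longrightarrow> fv \<phi> \<subseteq> {1} \<Longrightarrow> is_graph K G \<Longrightarrow> is_graph K H \<Longrightarrow>
        alg G v = alg H w \<Longrightarrow> sem G (\<lambda>_. v) \<phi> = sem H (\<lambda>_. w) \<phi>"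
    and sep: "\<And>G v H w. is_graph K G \<Longrightarrow> is_graph K H \<Longrightarrow> alg G v \<noteq> alg H w \<Longrightarrow>
        \<exists>\<phi>\<in>L. fv \<phi> \<subseteq> {1} \<and> sem G (\<lambda>_. v) \<phi> \<noteq> sem H (\<lambda>_. w) \<phi>"
  shows "uclos1 K (rep1 K L :: (('n,'l) graph \<times> 'n \<Rightarrow> real^'d::finite) set) = {f. cont1 K f \<and> rho1_sub K alg f}"
proof -
  define X where "X = {x :: ('n,'l) graph \<times> 'n. is_graph K (fst x)}"
  define F where "F = {\<phi>. \<phi> \<in> L \<and> fv \<phi> \<subseteq> {1}}"
  define val where "val \<phi> x = sem (fst x) (\<lambda>_. snd x) \<phi>" for \<phi> and x :: "('n,'l) graph \<times> 'n"
  define cc where "cc g = (\<forall>A v. continuous_on {c. is_graph K (A,c)} (\<lambda>c. g ((A,c),v)))"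
    for g :: "('n,'l) graph \<times> 'n \<Rightarrow> real"
  have appF: "App g as \<in> F" if "as \<noteq> []" "cont_arity (length as) g" "\<forall>a\<in>set as. a \<in> F" for g as
    using app[OF that(1,2)] that(3) unfolding F_def by auto
  have baseF: "EqI 1 1 \<in> F" using base unfolding F_def by simp
  have approx: "\<exists>\<phi>\<in>F. \<forall>x\<in>X. \<bar>val \<phi> x - fr x\<bar> < e"
    if e: "e > 0" and ccfr: "cc fr" and invfr: "\<forall>x\<in>X. \<forall>y\<in>X. alg (fst x) (snd x) = alg (fst y) (snd y) \<longrightarrow> fr x = fr y"
    for fr e
  proof (rule lattice_sw[where cc = cc])
    fix H assume "\<forall>y\<in>X. 0 < H y y \<and> cc (H y)"
    then show "\<exists>Y. finite Y \<and> Y \<subseteq> X \<and> (\<forall>x\<in>X. \<exists>y\<in>Y. 0 < H y x)"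
      unfolding X_def cc_def by (intro cover1[OF K]) auto
  next
    show "cc fr" by (rule ccfr)
  next
    fix \<phi> assume "\<phi> \<in> F"
    then have "omega_ok \<phi>" using ok unfolding F_def by auto
    then show "cc (val \<phi>)" unfolding cc_def val_def by (auto intro: sem_cont_on)
  next
    fix g h :: "('n,'l) graph \<times> 'n \<Rightarrow> real" and e :: real
    assume "cc g" "cc h"
    then show "cc (\<lambda>x. g x - h x + e)" unfolding cc_def by (auto intro!: continuous_intros)
  next
    fix c :: real
    have b: "\<forall>a\<in>set [EqI 1 1]. a \<in> F" using baseF by simp
    have "App (\<lambda>_. c) [EqI 1 1] \<in> F" by (rule appF[OF _ _ b]) (simp_all add: ca_const)
    then show "\<exists>\<phi>\<in>F. \<forall>x\<in>X. val \<phi> x = c" unfolding val_def by force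
  next
    fix \<phi> a b assume "\<phi> \<in> F"
    then have "App (\<lambda>xs. a * xs ! 0 + b) [\<phi>] \<in> F" by (intro appF) (auto simp: ca_aff)
    then show "\<exists>\<psi>\<in>F. \<forall>x\<in>X. val \<psi> x = a * val \<phi> x + b" unfolding val_def by force
  next
    fix \<phi> \<psi> assume "\<phi> \<in> F" "\<psi> \<in> F"
    then have "App (\<lambda>xs. max (xs ! 0) (xs ! 1)) [\<phi>, \<psi>] \<in> F" by (intro appF) (auto simp: ca_max)
    then show "\<exists>\<theta>\<in>F. \<forall>x\<in>X. val \<theta> x = max (val \<phi> x) (val \<psi> x)" unfolding val_def by force
  next
    fix \<phi> \<psi> assume "\<phi> \<in> F" "\<psi> \<in> F"
    then have "App (\<lambda>xs. min (xs ! 0) (xs ! 1)) [\<phi>, \<psi>] \<in> F" by (intro appF) (auto simp: ca_min)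
    then show "\<exists>\<theta>\<in>F. \<forall>x\<in>X. val \<theta> x = min (val \<phi> x) (val \<psi> x)" unfolding val_def by force
  next
    fix x y assume x: "x \<in> X" and y: "y \<in> X" and d: "fr x \<noteq> fr y"
    then have "alg (fst x) (snd x) \<noteq> alg (fst y) (snd y)" using invfr by blast
    then obtain \<phi> where "\<phi> \<in> L" "fv \<phi> \<subseteq> {1}" "sem (fst x) (\<lambda>_. snd x) \<phi> \<noteq> sem (fst y) (\<lambda>_. snd y) \<phi>"
      using sep x y unfolding X_def by blast
    then show "\<exists>\<phi>\<in>F. val \<phi> x \<noteq> val \<phi> y" unfolding F_def val_def by blast
  next
    show "e > 0" by (rule e)
  qed
  show ?thesis
  proof (intro set_eqI iffI)
    fix h :: "('n,'l) graph \<times> 'n \<Rightarrow> real^'d"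
    assume "h \<in> uclos1 K (rep1 K L)"
    then obtain S where ch: "cont1 K h" and S: "\<forall>j. S j \<in> rep1 K L"
      and ul: "uniform_limit {x. is_graph K (fst x)} S h sequentially"
      unfolding uclos1_def by blast
    have "h (G, v) = h (H, w)" if G: "is_graph K G" and H: "is_graph K H" and a: "alg G v = alg H w" for G v H w
    proof -
      have eq: "S j (G, v) = S j (H, w)" for j
      proof -
        obtain \<phi> :: "'d \<Rightarrow> 'l tl" where \<phi>: "\<forall>i. \<phi> i \<in> L \<and> fv (\<phi> i) \<subseteq> {1}"
          "\<forall>G v. is_graph K G \<longrightarrow> S j (G, v) = (\<chi> i. sem G (\<lambda>_. v) (\<phi> i))"
          using S[rule_format, of j] unfolding rep1_def by (rule CollectE) blast
        have 1: "S j (G, v) = (\<chi> i. sem G (\<lambda>_. v) (\<phi> i))" using \<phi>(2) G by blast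
        have 2: "S j (H, w) = (\<chi> i. sem H (\<lambda>_. w) (\<phi> i))" using \<phi>(2) H by blast
        show ?thesis unfolding 1 2 using \<phi>(1) inv[OF _ _ G H a] by (simp add: vec_eq_iff)
      qed
      have l1: "(\<lambda>j. S j (G, v)) \<longlonglongrightarrow> h (G, v)"
        by (rule tendsto_uniform_limitI[OF ul]) (simp add: G)
      have l2: "(\<lambda>j. S j (H, w)) \<longlonglongrightarrow> h (H, w)"
        by (rule tendsto_uniform_limitI[OF ul]) (simp add: H)
      have "(\<lambda>j. S j (H, w)) \<longlonglongrightarrow> h (G, v)" using l1 unfolding eq .
      then show ?thesis using l2 by (rule LIMSEQ_unique)
    qed
    then show "h \<in> {f. cont1 K f \<and> rho1_sub K alg f}"
      using ch unfolding rho1_sub_def by blast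
  next
    fix f :: "('n,'l) graph \<times> 'n \<Rightarrow> real^'d"
    assume "f \<in> {f. cont1 K f \<and> rho1_sub K alg f}"
    then have cf: "cont1 K f" and rf: "rho1_sub K alg f" by auto
    have ex: "\<forall>j i. \<exists>\<phi>. \<phi> \<in> F \<and> (\<forall>x\<in>X. \<bar>val \<phi> x - f x $ i\<bar> < inverse (real (Suc j)))"
    proof (intro allI)
      fix j i
      have c1: "cc (\<lambda>x. f x $ i)" unfolding cc_def
      proof (intro allI)
        fix A v
        have "continuous_on {c. is_graph K (A, c)} (\<lambda>c. f ((A, c), v))" using cf unfolding cont1_def by blast
        then show "continuous_on {c. is_graph K (A, c)} (\<lambda>c. f ((A, c), v) $ i)" by (rule continuous_on_component)
      qed
      have c2: "\<forall>x\<in>X. \<forall>y\<in>X. alg (fst x) (snd x) = alg (fst y) (snd y) \<longrightarrow> f x $ i = f y $ i"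
      proof (intro ballI impI)
        fix x y assume x: "x \<in> X" and y: "y \<in> X" and a: "alg (fst x) (snd x) = alg (fst y) (snd y)"
        have "f (fst x, snd x) = f (fst y, snd y)"
          using rf[unfolded rho1_sub_def, rule_format, of "fst x" "fst y" "snd x" "snd y"] x y a
          unfolding X_def by simp
        then show "f x $ i = f y $ i" by simp
      qed
      have pos: "inverse (real (Suc j)) > 0" by simp
      show "\<exists>\<phi>. \<phi> \<in> F \<and> (\<forall>x\<in>X. \<bar>val \<phi> x - f x $ i\<bar> < inverse (real (Suc j)))"
        using approx[OF pos c1 c2] by blast
    qed
    obtain \<Phi> where \<Phi>: "\<forall>j i. \<Phi> j i \<in> F \<and> (\<forall>x\<in>X. \<bar>val (\<Phi> j i) x - f x $ i\<bar> < inverse (real (Suc j)))"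
      using ex unfolding choice_iff by blast
    define S where "S j x = (\<chi> i. val (\<Phi> j i) x)" for j x
    have "S j \<in> rep1 K L" for j
    proof -
      have "\<forall>i. \<Phi> j i \<in> L \<and> fv (\<Phi> j i) \<subseteq> {1}" using \<Phi> unfolding F_def by blast
      moreover have "\<forall>G v. is_graph K G \<longrightarrow> S j (G, v) = (\<chi> i. sem G (\<lambda>_. v) (\<Phi> j i))"
        unfolding S_def val_def by simp
      ultimately show ?thesis unfolding rep1_def by blast
    qed
    moreover have "uniform_limit X S f sequentially"
    proof (rule uniform_limitI)
      fix e :: real assume e: "e > 0"
      obtain N where N: "\<forall>n\<ge>N. real CARD('d) * inverse (real (Suc n)) < e"
        using seq_bound[OF e] by blast
      have "\<forall>x\<in>X. dist (S n x) (f x) < e" if n: "n \<ge> N" for n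
      proof
        fix x assume x: "x \<in> X"
        have "\<forall>i. \<bar>S n x $ i - f x $ i\<bar> < inverse (real (Suc n))"
          using \<Phi> x unfolding S_def by auto
        then have "dist (S n x) (f x) < real CARD('d) * inverse (real (Suc n))"
          by (rule vec_dist_bound)
        then show "dist (S n x) (f x) < e" using N n by fastforce
      qed
      then show "\<forall>\<^sub>F n in sequentially. \<forall>x\<in>X. dist (S n x) (f x) < e"
        unfolding eventually_sequentially by blast
    qed
    ultimately show "f \<in> uclos1 K (rep1 K L)"
      unfolding uclos1_def X_def using cf by blast
  qed
qed

lemma main0:
  fixes K :: "(real^'l::finite) set" and L :: "'l tl set" and alg :: "('n::finite,'l) graph \<Rightarrow> 'c" and b0 :: "'l tl"
  assumes K: "compact K"
    and base: "b0 \<in> L" and base_fv: "fv b0 = {}"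
    and app: "\<And>g as. as \<noteq> [] \<Longrightarrow> cont_arity (length as) g \<Longrightarrow> (\<forall>a\<in>set as. a \<in> L \<and> fv a = {}) \<Longrightarrow> App g as \<in> L"
    and ok: "\<And>\<phi>. \<phi> \<in> L \<Longrightarrow> omega_ok \<phi>"
    and inv: "\<And>\<phi> G H. \<phi> \<in> L \<Longrightarrow> fv \<phi> = {} \<Longrightarrow> is_graph K G \<Longrightarrow> is_graph K H \<Longrightarrow>
        alg G = alg H \<Longrightarrow> sem G (\<lambda>_. undefined) \<phi> = sem H (\<lambda>_. undefined) \<phi>"
    and sep: "\<And>G H. is_graph K G \<Longrightarrow> is_graph K H \<Longrightarrow> alg G \<noteq> alg H \<Longrightarrow>
        \<exists>\<phi>\<in>L. fv \<phi> = {} \<and> sem G (\<lambda>_. undefined) \<phi> \<noteq> sem H (\<lambda>_. undefined) \<phi>"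
  shows "uclos0 K (rep0 K L :: (('n,'l) graph \<Rightarrow> real^'d::finite) set) = {f. cont0 K f \<and> rho0_sub K alg f}"
proof -
  define X where "X = {G :: ('n,'l) graph. is_graph K G}"
  define F where "F = {\<phi>. \<phi> \<in> L \<and> fv \<phi> = {}}"
  define val where "val \<phi> G = sem G (\<lambda>_. undefined) \<phi>" for \<phi> and G :: "('n,'l) graph"
  define cc where "cc g = (\<forall>A. continuous_on {c. is_graph K (A,c)} (\<lambda>c. g (A,c)))"
    for g :: "('n,'l) graph \<Rightarrow> real"
  have appF: "App g as \<in> F" if "as \<noteq> []" "cont_arity (length as) g" "\<forall>a\<in>set as. a \<in> F" for g as
  proof -
    have "App g as \<in> L" using app[OF that(1,2)] that(3) unfolding F_def by auto
    moreover have "fv (App g as) = {}" using that(3) unfolding F_def by auto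
    ultimately show ?thesis unfolding F_def by blast
  qed
  have baseF: "b0 \<in> F" using base base_fv unfolding F_def by simp
  have approx: "\<exists>\<phi>\<in>F. \<forall>x\<in>X. \<bar>val \<phi> x - fr x\<bar> < e"
    if e: "e > 0" and ccfr: "cc fr" and invfr: "\<forall>x\<in>X. \<forall>y\<in>X. alg x = alg y \<longrightarrow> fr x = fr y"
    for fr e
  proof (rule lattice_sw[where cc = cc])
    fix H assume "\<forall>y\<in>X. 0 < H y y \<and> cc (H y)"
    then show "\<exists>Y. finite Y \<and> Y \<subseteq> X \<and> (\<forall>x\<in>X. \<exists>y\<in>Y. 0 < H y x)"
      unfolding X_def cc_def by (intro cover0[OF K]) auto
  next
    show "cc fr" by (rule ccfr)
  next
    fix \<phi> assume "\<phi> \<in> F"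
    then have "omega_ok \<phi>" using ok unfolding F_def by auto
    then show "cc (val \<phi>)" unfolding cc_def val_def by (auto intro: sem_cont_on)
  next
    fix g h :: "('n,'l) graph \<Rightarrow> real" and e :: real
    assume "cc g" "cc h"
    then show "cc (\<lambda>x. g x - h x + e)" unfolding cc_def by (auto intro!: continuous_intros)
  next
    fix c :: real
    have b: "\<forall>a\<in>set [b0]. a \<in> F" using baseF by simp
    have "App (\<lambda>_. c) [b0] \<in> F" by (rule appF[OF _ _ b]) (simp_all add: ca_const)
    then show "\<exists>\<phi>\<in>F. \<forall>x\<in>X. val \<phi> x = c" unfolding val_def by force
  next
    fix \<phi> a b assume "\<phi> \<in> F"
    then have "App (\<lambda>xs. a * xs ! 0 + b) [\<phi>] \<in> F" by (intro appF) (auto simp: ca_aff)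
    then show "\<exists>\<psi>\<in>F. \<forall>x\<in>X. val \<psi> x = a * val \<phi> x + b" unfolding val_def by force
  next
    fix \<phi> \<psi> assume "\<phi> \<in> F" "\<psi> \<in> F"
    then have "App (\<lambda>xs. max (xs ! 0) (xs ! 1)) [\<phi>, \<psi>] \<in> F" by (intro appF) (auto simp: ca_max)
    then show "\<exists>\<theta>\<in>F. \<forall>x\<in>X. val \<theta> x = max (val \<phi> x) (val \<psi> x)" unfolding val_def by force
  next
    fix \<phi> \<psi> assume "\<phi> \<in> F" "\<psi> \<in> F"
    then have "App (\<lambda>xs. min (xs ! 0) (xs ! 1)) [\<phi>, \<psi>] \<in> F" by (intro appF) (auto simp: ca_min)
    then show "\<exists>\<theta>\<in>F. \<forall>x\<in>X. val \<theta> x = min (val \<phi> x) (val \<psi> x)" unfolding val_def by force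
  next
    fix x y assume x: "x \<in> X" and y: "y \<in> X" and d: "fr x \<noteq> fr y"
    then have "alg x \<noteq> alg y" using invfr by blast
    then obtain \<phi> where "\<phi> \<in> L" "fv \<phi> = {}" "sem x (\<lambda>_. undefined) \<phi> \<noteq> sem y (\<lambda>_. undefined) \<phi>"
      using sep x y unfolding X_def by blast
    then show "\<exists>\<phi>\<in>F. val \<phi> x \<noteq> val \<phi> y" unfolding F_def val_def by blast
  next
    show "e > 0" by (rule e)
  qed
  show ?thesis
  proof (intro set_eqI iffI)
    fix h :: "('n,'l) graph \<Rightarrow> real^'d"
    assume "h \<in> uclos0 K (rep0 K L)"
    then obtain S where ch: "cont0 K h" and S: "\<forall>j. S j \<in> rep0 K L"
      and ul: "uniform_limit {G. is_graph K G} S h sequentially"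
      unfolding uclos0_def by blast
    have "h G = h H" if G: "is_graph K G" and H: "is_graph K H" and a: "alg G = alg H" for G H
    proof -
      have eq: "S j G = S j H" for j
      proof -
        obtain \<phi> :: "'d \<Rightarrow> 'l tl" where \<phi>: "\<forall>i. \<phi> i \<in> L \<and> fv (\<phi> i) = {}"
          "\<forall>G. is_graph K G \<longrightarrow> S j G = (\<chi> i. sem G (\<lambda>_. undefined) (\<phi> i))"
          using S[rule_format, of j] unfolding rep0_def by (rule CollectE) blast
        have 1: "S j G = (\<chi> i. sem G (\<lambda>_. undefined) (\<phi> i))" using \<phi>(2) G by blast
        have 2: "S j H = (\<chi> i. sem H (\<lambda>_. undefined) (\<phi> i))" using \<phi>(2) H by blast
        show ?thesis unfolding 1 2 using \<phi>(1) inv[OF _ _ G H a] by (simp add: vec_eq_iff)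
      qed
      have l1: "(\<lambda>j. S j G) \<longlonglongrightarrow> h G"
        by (rule tendsto_uniform_limitI[OF ul]) (simp add: G)
      have l2: "(\<lambda>j. S j H) \<longlonglongrightarrow> h H"
        by (rule tendsto_uniform_limitI[OF ul]) (simp add: H)
      have "(\<lambda>j. S j H) \<longlonglongrightarrow> h G" using l1 unfolding eq .
      then show ?thesis using l2 by (rule LIMSEQ_unique)
    qed
    then show "h \<in> {f. cont0 K f \<and> rho0_sub K alg f}"
      using ch unfolding rho0_sub_def by blast
  next
    fix f :: "('n,'l) graph \<Rightarrow> real^'d"
    assume "f \<in> {f. cont0 K f \<and> rho0_sub K alg f}"
    then have cf: "cont0 K f" and rf: "rho0_sub K alg f" by auto
    have ex: "\<forall>j i. \<exists>\<phi>. \<phi> \<in> F \<and> (\<forall>x\<in>X. \<bar>val \<phi> x - f x $ i\<bar> < inverse (real (Suc j)))"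
    proof (intro allI)
      fix j i
      have c1: "cc (\<lambda>x. f x $ i)" unfolding cc_def
      proof (intro allI)
        fix A
        have "continuous_on {c. is_graph K (A, c)} (\<lambda>c. f (A, c))" using cf unfolding cont0_def by blast
        then show "continuous_on {c. is_graph K (A, c)} (\<lambda>c. f (A, c) $ i)" by (rule continuous_on_component)
      qed
      have c2: "\<forall>x\<in>X. \<forall>y\<in>X. alg x = alg y \<longrightarrow> f x $ i = f y $ i"
      proof (intro ballI impI)
        fix x y assume x: "x \<in> X" and y: "y \<in> X" and a: "alg x = alg y"
        have "f x = f y"
          using rf[unfolded rho0_sub_def, rule_format, of x y] x y a
          unfolding X_def by simp
        then show "f x $ i = f y $ i" by simp
      qed
      have pos: "inverse (real (Suc j)) > 0" by simp
      show "\<exists>\<phi>. \<phi> \<in> F \<and> (\<forall>x\<in>X. \<bar>val \<phi> x - f x $ i\<bar> < inverse (real (Suc j)))"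
        using approx[OF pos c1 c2] by blast
    qed
    obtain \<Phi> where \<Phi>: "\<forall>j i. \<Phi> j i \<in> F \<and> (\<forall>x\<in>X. \<bar>val (\<Phi> j i) x - f x $ i\<bar> < inverse (real (Suc j)))"
      using ex unfolding choice_iff by blast
    define S where "S j x = (\<chi> i. val (\<Phi> j i) x)" for j x
    have "S j \<in> rep0 K L" for j
    proof -
      have "\<forall>i. \<Phi> j i \<in> L \<and> fv (\<Phi> j i) = {}" using \<Phi> unfolding F_def by blast
      moreover have "\<forall>G. is_graph K G \<longrightarrow> S j G = (\<chi> i. sem G (\<lambda>_. undefined) (\<Phi> j i))"
        unfolding S_def val_def by simp
      ultimately show ?thesis unfolding rep0_def by blast
    qed
    moreover have "uniform_limit X S f sequentially"
    proof (rule uniform_limitI)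
      fix e :: real assume e: "e > 0"
      obtain N where N: "\<forall>n\<ge>N. real CARD('d) * inverse (real (Suc n)) < e"
        using seq_bound[OF e] by blast
      have "\<forall>x\<in>X. dist (S n x) (f x) < e" if n: "n \<ge> N" for n
      proof
        fix x assume x: "x \<in> X"
        have "\<forall>i. \<bar>S n x $ i - f x $ i\<bar> < inverse (real (Suc n))"
          using \<Phi> x unfolding S_def by auto
        then have "dist (S n x) (f x) < real CARD('d) * inverse (real (Suc n))"
          by (rule vec_dist_bound)
        then show "dist (S n x) (f x) < e" using N n by fastforce
      qed
      then show "\<forall>\<^sub>F n in sequentially. \<forall>x\<in>X. dist (S n x) (f x) < e"
        unfolding eventually_sequentially by blast
    qed
    ultimately show "f \<in> uclos0 K (rep0 K L)"
      unfolding uclos0_def X_def using cf by blast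
  qed
qed


lemma sum_mset_eq:
  assumes A: "finite A" and B: "finite B"
    and eq: "image_mset f (mset_set A) = image_mset g (mset_set B)"
    and pq: "\<And>a b. a \<in> A \<Longrightarrow> b \<in> B \<Longrightarrow> f a = g b \<Longrightarrow> p a = (q b :: 'r::comm_monoid_add)"
  shows "sum p A = sum q B"
proof -
  define P where "P x = q (SOME b. b \<in> B \<and> g b = x)" for x
  have imgs: "f ` A = g ` B"
  proof -
    have "set_mset (image_mset f (mset_set A)) = set_mset (image_mset g (mset_set B))" using eq by simp
    then show ?thesis using A B by simp
  qed
  have 1: "p a = P (f a)" if a: "a \<in> A" for a
  proof -
    have "\<exists>b. b \<in> B \<and> g b = f a" using imgs a by (metis image_eqI imageE)
    then have "(SOME b. b \<in> B \<and> g b = f a) \<in> B \<and> g (SOME b. b \<in> B \<and> g b = f a) = f a"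
      by (rule someI_ex)
    then show ?thesis unfolding P_def using pq a by metis
  qed
  have 2: "q b = P (g b)" if b: "b \<in> B" for b
  proof -
    obtain a where a: "a \<in> A" "f a = g b" using imgs b by (metis image_eqI imageE)
    have "\<exists>b'. b' \<in> B \<and> g b' = g b" using b by blast
    then have "(SOME b'. b' \<in> B \<and> g b' = g b) \<in> B \<and> g (SOME b'. b' \<in> B \<and> g b' = g b) = g b"
      by (rule someI_ex)
    then have "p a = P (g b)" unfolding P_def using pq[of a] a by metis
    moreover have "p a = q b" using pq[OF a(1) b a(2)] .
    ultimately show ?thesis by simp
  qed
  have "sum p A = sum (\<lambda>a. P (f a)) A" using 1 by (rule sum.cong[OF refl])
  also have "\<dots> = sum_mset (image_mset P (image_mset f (mset_set A)))"
    by (simp add: sum_unfold_sum_mset image_mset.compositionality o_def)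
  also have "\<dots> = sum_mset (image_mset P (image_mset g (mset_set B)))" by (simp only: eq)
  also have "\<dots> = sum (\<lambda>b. P (g b)) B"
    by (simp add: sum_unfold_sum_mset image_mset.compositionality o_def)
  also have "\<dots> = sum q B" using 2 by (intro sum.cong) auto
  finally show ?thesis .
qed

lemma count_image_mset_card:
  assumes "finite A"
  shows "count (image_mset f (mset_set A)) x = card {a \<in> A. f a = x}"
proof -
  have "count (image_mset f (mset_set A)) x = (\<Sum>y\<in>f -` {x} \<inter> A. 1)"
    unfolding count_image_mset using assms by (intro sum.cong) auto
  also have "\<dots> = card (f -` {x} \<inter> A)" by simp
  also have "f -` {x} \<inter> A = {a \<in> A. f a = x}" by auto
  finally show ?thesis .
qed

lemma cr_Suc_eq: "cr (Suc t) G v = cr (Suc t) H w \<longleftrightarrow>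
   cr t G v = cr t H w \<and> image_mset (cr t G) (mset_set {u. adjG G v u}) = image_mset (cr t H) (mset_set {u. adjG H w u})"
  by simp

lemma cr_mono: "cr t G v = cr t H w \<Longrightarrow> s \<le> t \<Longrightarrow> cr s G v = cr s H w"
proof (induction t)
  case 0 then show ?case by simp
next
  case (Suc t)
  then show ?case by (cases "s = Suc t") (auto simp: le_Suc_eq)
qed

lemma cr_col: "cr t G v = cr t H w \<Longrightarrow> colG G v = colG H w"
  using cr_mono[of t G v H w 0] by simp

lemma wl_Suc_eq: "wl k (Suc t) G vs = wl k (Suc t) H ws \<longleftrightarrow>
   wl k t G vs = wl k t H ws \<and>
   image_mset (\<lambda>u. LTup (atp G (vs @ [u]) # map (\<lambda>i. wl k t G (vs[i := u])) [0..<k])) (mset_set UNIV) =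
   image_mset (\<lambda>u. LTup (atp H (ws @ [u]) # map (\<lambda>i. wl k t H (ws[i := u])) [0..<k])) (mset_set UNIV)"
  by simp

lemma wl_mono: "wl k t G vs = wl k t H ws \<Longrightarrow> s \<le> t \<Longrightarrow> wl k s G vs = wl k s H ws"
proof (induction t)
  case 0 then show ?case by simp
next
  case (Suc t)
  then show ?case by (cases "s = Suc t") (auto simp: le_Suc_eq)
qed

lemma wl_atp: "wl k t G vs = wl k t H ws \<Longrightarrow> atp G vs = atp H ws"
  using wl_mono[of k t G vs H ws 0] by simp

definition pidx :: "nat \<Rightarrow> (nat \<times> nat) list" where
  "pidx n = concat (map (\<lambda>i. map (\<lambda>j. (i, j)) [Suc i..<n]) [0..<n])"

lemma set_pidx: "set (pidx n) = {(i, j). i < j \<and> j < n}"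
proof
  show "set (pidx n) \<subseteq> {(i, j). i < j \<and> j < n}" unfolding pidx_def by auto
  show "{(i, j). i < j \<and> j < n} \<subseteq> set (pidx n)"
  proof clarify
    fix a b assume "a < b" "b < n"
    then show "(a, b) \<in> set (pidx n)" unfolding pidx_def
      by (simp, intro bexI[of _ a]) auto
  qed
qed

lemma atp_alt: "atp G vs = LAtp (map (\<lambda>(i,j). (vs ! i = vs ! j, adjG G (vs ! i) (vs ! j))) (pidx (length vs))) (map (colG G) vs)"
  unfolding atp_def pidx_def by (simp add: map_concat o_def)

lemma atp_eq_iff: "atp G vs = atp H ws \<longleftrightarrow> length vs = length ws \<and>
   (\<forall>i j. i < j \<and> j < length vs \<longrightarrow> (vs ! i = vs ! j \<longleftrightarrow> ws ! i = ws ! j) \<and> (adjG G (vs ! i) (vs ! j) \<longleftrightarrow> adjG H (ws ! i) (ws ! j))) \<and>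
   (\<forall>i < length vs. colG G (vs ! i) = colG H (ws ! i))"
  (is "?L \<longleftrightarrow> ?R")
proof
  assume L: ?L
  then have c: "map (colG G) vs = map (colG H) ws" and
    p: "map (\<lambda>(i,j). (vs ! i = vs ! j, adjG G (vs ! i) (vs ! j))) (pidx (length vs)) =
        map (\<lambda>(i,j). (ws ! i = ws ! j, adjG H (ws ! i) (ws ! j))) (pidx (length ws))"
    unfolding atp_alt by auto
  have len: "length vs = length ws" using c by (metis length_map)
  have "\<forall>x\<in>set (pidx (length vs)). (\<lambda>(i,j). (vs ! i = vs ! j, adjG G (vs ! i) (vs ! j))) x =
      (\<lambda>(i,j). (ws ! i = ws ! j, adjG H (ws ! i) (ws ! j))) x"
    using p unfolding len map_eq_conv by blast
  then have "\<forall>i j. i < j \<and> j < length vs \<longrightarrow> (vs ! i = vs ! j \<longleftrightarrow> ws ! i = ws ! j) \<and> (adjG G (vs ! i) (vs ! j) \<longleftrightarrow> adjG H (ws ! i) (ws ! j))"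
    unfolding set_pidx len by auto
  moreover have "\<forall>i < length vs. colG G (vs ! i) = colG H (ws ! i)"
    using c len by (metis nth_map)
  ultimately show ?R using len by blast
next
  assume R: ?R
  then have len: "length vs = length ws" by blast
  have "map (colG G) vs = map (colG H) ws"
    using R by (intro nth_equalityI) auto
  moreover have "map (\<lambda>(i,j). (vs ! i = vs ! j, adjG G (vs ! i) (vs ! j))) (pidx (length vs)) =
        map (\<lambda>(i,j). (ws ! i = ws ! j, adjG H (ws ! i) (ws ! j))) (pidx (length ws))"
    unfolding len[symmetric] by (rule map_cong[OF refl]) (use R in \<open>auto simp: set_pidx\<close>)
  ultimately show ?L unfolding atp_alt by simp
qed

lemma is_graph_sym: "is_graph K G \<Longrightarrow> adjG G u v = adjG G v u"
  by (simp add: is_graph_def)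

lemma is_graph_irr: "is_graph K G \<Longrightarrow> \<not> adjG G v v"
  by (simp add: is_graph_def)

lemma atp_pat:
  assumes e: "atp G (map \<nu> qs) = atp H (map \<mu> qs)" and G: "is_graph K G" and H: "is_graph K H"
    and a: "a \<in> set qs" and b: "b \<in> set qs"
  shows "(\<nu> a = \<nu> b \<longleftrightarrow> \<mu> a = \<mu> b) \<and> (adjG G (\<nu> a) (\<nu> b) \<longleftrightarrow> adjG H (\<mu> a) (\<mu> b)) \<and> colG G (\<nu> a) = colG H (\<mu> a)"
proof -
  obtain i where i: "i < length qs" "qs ! i = a" using a by (auto simp: in_set_conv_nth)
  obtain j where j: "j < length qs" "qs ! j = b" using b by (auto simp: in_set_conv_nth)
  note E = e[unfolded atp_eq_iff, simplified]
  have col: "colG G (\<nu> a) = colG H (\<mu> a)" using E i by auto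
  have "(\<nu> a = \<nu> b \<longleftrightarrow> \<mu> a = \<mu> b) \<and> (adjG G (\<nu> a) (\<nu> b) \<longleftrightarrow> adjG H (\<mu> a) (\<mu> b))"
  proof (cases i j rule: linorder_cases)
    case less then show ?thesis using E i j by auto
  next
    case equal then show ?thesis using i j is_graph_irr[OF G] is_graph_irr[OF H] by auto
  next
    case greater
    then have "(\<nu> b = \<nu> a \<longleftrightarrow> \<mu> b = \<mu> a) \<and> (adjG G (\<nu> b) (\<nu> a) \<longleftrightarrow> adjG H (\<mu> b) (\<mu> a))"
      using E i j by auto
    then show ?thesis using is_graph_sym[OF G] is_graph_sym[OF H] by metis
  qed
  then show ?thesis using col by blast
qed


lemma gtl_fv: "gtl i \<phi> \<Longrightarrow> fv \<phi> = {i}"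
proof (induction rule: gtl.induct)
  case (g_app as i g)
  then show ?case by (cases as) auto
next
  case (g_sum i j a)
  then show ?case by auto
qed auto

lemma gtl_idx: "gtl i \<phi> \<Longrightarrow> i \<in> {1,2}"
proof (induction rule: gtl.induct)
  case (g_app as i g)
  then obtain a where "a \<in> set as" by (cases as) auto
  then show ?case using g_app by blast
qed auto

lemma sum_adj:
  "(\<Sum>u\<in>UNIV. (if adjG G v u then 1 else 0) * (f u :: real)) = (\<Sum>u\<in>{u. adjG G v u}. f u)"
proof -
  have "(\<Sum>u\<in>UNIV. (if adjG G v u then 1 else 0) * f u) = (\<Sum>u\<in>UNIV. if adjG G v u then f u else 0)"
    by (intro sum.cong) auto
  also have "\<dots> = (\<Sum>u\<in>{u \<in> UNIV. adjG G v u}. f u)" by (rule sum.inter_filter[symmetric]) simp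
  finally show ?thesis by simp
qed

lemma gtl_inv:
  assumes G: "is_graph K G" and H: "is_graph K H"
  shows "gtl i \<phi> \<Longrightarrow> sdepth \<phi> \<le> t \<Longrightarrow> cr t G (\<nu> i) = cr t H (\<mu> i) \<Longrightarrow> sem G \<nu> \<phi> = sem H \<mu> \<phi>"
proof (induction i \<phi> arbitrary: t \<nu> \<mu> rule: gtl.induct)
  case (g_eq i) then show ?case by simp
next
  case (g_neq i) then show ?case by simp
next
  case (g_col i s) then show ?case using cr_col[OF g_col.prems(2)] by simp
next
  case (g_mul i a b) then show ?case by (metis max.bounded_iff sdepth.simps(5) sem.simps(5))
next
  case (g_add i a b) then show ?case by (metis max.bounded_iff sdepth.simps(6) sem.simps(6))
next
  case (g_scale i a c) then show ?case by simp
next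
  case (g_app as i g)
  have "map (sem G \<nu>) as = map (sem H \<mu>) as"
  proof (rule map_cong[OF refl])
    fix a assume a: "a \<in> set as"
    have "sdepth a \<le> t" using g_app.prems(1) a by (auto simp: Max_ge_iff)
    then show "sem G \<nu> a = sem H \<mu> a" using g_app.IH a g_app.prems(2) by blast
  qed
  then show ?case by (simp only: sem.simps)
next
  case (g_sum i j a)
  have ij: "i \<noteq> j" using g_sum.hyps(1) by auto
  obtain t' where t: "t = Suc t'" and da: "sdepth a \<le> t'"
    using g_sum.prems(1) by (cases t) auto
  have crs: "image_mset (cr t' G) (mset_set {u. adjG G (\<nu> i) u}) = image_mset (cr t' H) (mset_set {u. adjG H (\<mu> i) u})"
    using g_sum.prems(2) unfolding t by simp
  have "sem G \<nu> (Sum j (Mul (Edge i j) a)) = (\<Sum>u\<in>{u. adjG G (\<nu> i) u}. sem G (\<nu>(j := u)) a)"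
    using ij by (simp add: sum_adj)
  also have "\<dots> = (\<Sum>u\<in>{u. adjG H (\<mu> i) u}. sem H (\<mu>(j := u)) a)"
  proof (rule sum_mset_eq[OF _ _ crs])
    fix u u' assume "cr t' G u = cr t' H u'"
    then show "sem G (\<nu>(j := u)) a = sem H (\<mu>(j := u')) a"
      using g_sum.IH[OF da, of "\<nu>(j := u)" "\<mu>(j := u')"] by (simp add: fun_upd_def)
  qed auto
  also have "\<dots> = sem H \<mu> (Sum j (Mul (Edge i j) a))"
    using ij by (simp add: sum_adj)
  finally show ?case .
qed


lemma set_update_keep: "l < length xs \<Longrightarrow> l \<noteq> i \<Longrightarrow> xs ! l \<in> set (xs[i := y])"
  by (metis length_list_update nth_list_update_neq nth_mem)

lemma set_update_new: "i < length xs \<Longrightarrow> y \<in> set (xs[i := y])"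
  by (simp add: set_update_memI)

lemma sem_Sum_rename:
  assumes "w \<notin> fv (Sum j \<psi>)"
  shows "sem G \<nu> (Sum w (ren (sw j w) \<psi>)) = sem G \<nu> (Sum j \<psi>)"
proof -
  have "sem G (\<nu>(w := u)) (ren (sw j w) \<psi>) = sem G (\<nu>(j := u)) \<psi>" for u
  proof -
    have "sem G (\<nu>(w := u)) (ren (sw j w) \<psi>) = sem G (\<nu>(w := u) \<circ> sw j w) \<psi>"
      by (rule sem_ren[OF inj_sw])
    also have "\<dots> = sem G (\<nu>(j := u)) \<psi>"
    proof (rule sem_fv, rule ballI)
      fix x assume x: "x \<in> fv \<psi>"
      show "(\<nu>(w := u) \<circ> sw j w) x = (\<nu>(j := u)) x"
      proof (cases "x = j")
        case True then show ?thesis by simp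
      next
        case False
        then have "x \<noteq> w" using x assms by auto
        then show ?thesis using False by simp
      qed
    qed
    finally show ?thesis .
  qed
  then show ?thesis by simp
qed

lemma map_upd_notin: "j \<notin> set ps \<Longrightarrow> map (\<nu>(j := u)) ps = map \<nu> ps"
  by (intro map_cong) auto

context
  fixes K :: "(real^'l::finite) set" and k :: nat and G H :: "('n::finite,'l) graph"
  assumes k: "k \<ge> 1" and G: "is_graph K G" and H: "is_graph K H"
begin

lemma D_of_C:
  assumes C: "\<And>ps \<nu> \<mu> \<phi>. length ps = k \<Longrightarrow> set ps \<subseteq> {1..k+1} \<Longrightarrow> wl k s G (map \<nu> ps) = wl k s H (map \<mu> ps) \<Longrightarrow>
      vars \<phi> \<subseteq> {1..k+1} \<Longrightarrow> fv \<phi> \<subseteq> set ps \<Longrightarrow> sdepth \<phi> \<le> s \<Longrightarrow> sem G \<nu> \<phi> = sem H \<mu> \<phi>"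
    and ps: "length ps = k" "set ps \<subseteq> {1..k+1}" and j: "j \<in> {1..k+1}"
    and ha: "atp G (map \<nu> (ps @ [j])) = atp H (map \<mu> (ps @ [j]))"
    and hw: "\<forall>i<k. wl k s G (map \<nu> (ps[i := j])) = wl k s H (map \<mu> (ps[i := j]))"
    and h0: "wl k s G (map \<nu> ps) = wl k s H (map \<mu> ps)"
  shows "vars \<psi> \<subseteq> {1..k+1} \<Longrightarrow> fv \<psi> \<subseteq> set ps \<union> {j} \<Longrightarrow> sdepth \<psi> \<le> s \<Longrightarrow> sem G \<nu> \<psi> = sem H \<mu> \<psi>"
proof (induction \<psi>)
  case (EqI a b)
  then have "a \<in> set (ps @ [j])" "b \<in> set (ps @ [j])" by auto
  then show ?case using atp_pat[OF ha G H] by simp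
next
  case (NeqI a b)
  then have "a \<in> set (ps @ [j])" "b \<in> set (ps @ [j])" by auto
  then show ?case using atp_pat[OF ha G H] by simp
next
  case (Edge a b)
  then have "a \<in> set (ps @ [j])" "b \<in> set (ps @ [j])" by auto
  then show ?case using atp_pat[OF ha G H] by simp
next
  case (Pcol s' a)
  then have "a \<in> set (ps @ [j])" by auto
  then show ?case using atp_pat[OF ha G H] by simp
next
  case (Mul a b)
  then show ?case by simp
next
  case (Add a b)
  then show ?case by simp
next
  case (Scale c a)
  then show ?case by simp
next
  case (App g as)
  have "map (sem G \<nu>) as = map (sem H \<mu>) as"
  proof (rule map_cong[OF refl])
    fix a assume a: "a \<in> set as"
    have "sdepth a \<le> s" using App.prems(3) a by (auto simp: Max_ge_iff)
    moreover have "vars a \<subseteq> {1..k+1}" "fv a \<subseteq> set ps \<union> {j}" using App.prems(1,2) a by auto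
    ultimately show "sem G \<nu> a = sem H \<mu> a" using App.IH a by blast
  qed
  then show ?case by (simp only: sem.simps)
next
  case (Sum m \<gamma>)
  have m: "m \<in> {1..k+1}" using Sum.prems(1) by auto
  have "\<exists>ps'. length ps' = k \<and> set ps' \<subseteq> {1..k+1} \<and> fv (Sum m \<gamma>) \<subseteq> set ps' \<and> wl k s G (map \<nu> ps') = wl k s H (map \<mu> ps')"
  proof (cases "j \<notin> fv (Sum m \<gamma>) \<or> j \<in> set ps")
    case True
    then have "fv (Sum m \<gamma>) \<subseteq> set ps" using Sum.prems(2) by auto
    then show ?thesis using ps h0 by blast
  next
    case False
    then have jf: "j \<in> fv (Sum m \<gamma>)" and jp: "j \<notin> set ps" by auto
    then have mj: "m \<noteq> j" by auto
    obtain i where i: "i < k" "fv (Sum m \<gamma>) \<subseteq> set (ps[i := j])"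
    proof (cases "m \<in> set ps")
      case True
      then obtain i where i: "i < k" "ps ! i = m" using ps(1) by (auto simp: in_set_conv_nth)
      have "fv (Sum m \<gamma>) \<subseteq> set (ps[i := j])"
      proof
        fix x assume x: "x \<in> fv (Sum m \<gamma>)"
        show "x \<in> set (ps[i := j])"
        proof (cases "x = j")
          case True then show ?thesis using set_update_new i ps(1) by auto
        next
          case False
          then have "x \<in> set ps" "x \<noteq> m" using x Sum.prems(2) by auto
          then obtain l where "l < k" "ps ! l = x" using ps(1) by (auto simp: in_set_conv_nth)
          then show ?thesis using set_update_keep[of l ps i j] i ps(1) \<open>x \<noteq> m\<close> by auto
        qed
      qed
      then show ?thesis using that i(1) by blast
    next
      case False
      have sub: "set ps \<subseteq> {1..k+1} - {m, j}" using ps(2) False jp by auto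
      have "card ({1..k+1} - {m, j}) = k - 1" using m j mj by (simp add: card_Diff_subset)
      then have "card (set ps) \<le> k - 1" using sub by (metis card_mono finite_Diff finite_atLeastAtMost)
      then have "\<not> distinct ps" using ps(1) k distinct_card by fastforce
      then obtain i i' where ii: "i < k" "i' < k" "i \<noteq> i'" "ps ! i = ps ! i'"
        using ps(1) by (auto simp: distinct_conv_nth)
      have "fv (Sum m \<gamma>) \<subseteq> set (ps[i := j])"
      proof
        fix x assume x: "x \<in> fv (Sum m \<gamma>)"
        show "x \<in> set (ps[i := j])"
        proof (cases "x = j")
          case True then show ?thesis using set_update_new ii ps(1) by auto
        next
          case False
          then have "x \<in> set ps" using x Sum.prems(2) by auto
          then obtain l where l: "l < k" "ps ! l = x" using ps(1) by (auto simp: in_set_conv_nth)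
          show ?thesis
          proof (cases "l = i")
            case True
            then show ?thesis using set_update_keep[of i' ps i j] ii ps(1) l by auto
          next
            case False
            then show ?thesis using set_update_keep[of l ps i j] l ps(1) by auto
          qed
        qed
      qed
      then show ?thesis using that ii(1) by blast
    qed
    moreover have "length (ps[i := j]) = k" "set (ps[i := j]) \<subseteq> {1..k+1}"
      using ps j set_update_subset_insert[of ps i j] by auto
    ultimately show ?thesis using hw by blast
  qed
  then obtain ps' where "length ps' = k" "set ps' \<subseteq> {1..k+1}" "fv (Sum m \<gamma>) \<subseteq> set ps'"
    "wl k s G (map \<nu> ps') = wl k s H (map \<mu> ps')" by blast
  then show ?case using C Sum.prems by blast
qed

lemma C_of_D:
  assumes D: "\<And>s' ps j \<nu> \<mu> \<psi>. s = Suc s' \<Longrightarrow> length ps = k \<Longrightarrow> set ps \<subseteq> {1..k+1} \<Longrightarrow> j \<in> {1..k+1} \<Longrightarrow>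
      atp G (map \<nu> (ps @ [j])) = atp H (map \<mu> (ps @ [j])) \<Longrightarrow>
      (\<forall>i<k. wl k s' G (map \<nu> (ps[i := j])) = wl k s' H (map \<mu> (ps[i := j]))) \<Longrightarrow>
      wl k s' G (map \<nu> ps) = wl k s' H (map \<mu> ps) \<Longrightarrow>
      vars \<psi> \<subseteq> {1..k+1} \<Longrightarrow> fv \<psi> \<subseteq> set ps \<union> {j} \<Longrightarrow> sdepth \<psi> \<le> s' \<Longrightarrow> sem G \<nu> \<psi> = sem H \<mu> \<psi>"
    and ps: "length ps = k" "set ps \<subseteq> {1..k+1}"
    and h: "wl k s G (map \<nu> ps) = wl k s H (map \<mu> ps)"
  shows "vars \<phi> \<subseteq> {1..k+1} \<Longrightarrow> fv \<phi> \<subseteq> set ps \<Longrightarrow> sdepth \<phi> \<le> s \<Longrightarrow> sem G \<nu> \<phi> = sem H \<mu> \<phi>"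
proof (induction \<phi>)
  case (EqI a b)
  then show ?case using atp_pat[OF wl_atp[OF h] G H] by simp
next
  case (NeqI a b)
  then show ?case using atp_pat[OF wl_atp[OF h] G H] by simp
next
  case (Edge a b)
  then show ?case using atp_pat[OF wl_atp[OF h] G H] by simp
next
  case (Pcol s' a)
  then show ?case using atp_pat[OF wl_atp[OF h] G H] by simp
next
  case (Mul a b)
  then show ?case by simp
next
  case (Add a b)
  then show ?case by simp
next
  case (Scale c a)
  then show ?case by simp
next
  case (App g as)
  have "map (sem G \<nu>) as = map (sem H \<mu>) as"
  proof (rule map_cong[OF refl])
    fix a assume a: "a \<in> set as"
    have "sdepth a \<le> s" using App.prems(3) a by (auto simp: Max_ge_iff)
    moreover have "vars a \<subseteq> {1..k+1}" "fv a \<subseteq> set ps" using App.prems(1,2) a by auto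
    ultimately show "sem G \<nu> a = sem H \<mu> a" using App.IH a by blast
  qed
  then show ?case by (simp only: sem.simps)
next
  case (Sum j \<psi>)
  obtain s' where s: "s = Suc s'" and d\<psi>: "sdepth \<psi> \<le> s'" using Sum.prems(3) by (cases s) auto
  let ?vs = "map \<nu> ps" and ?ws = "map \<mu> ps"
  have h': "wl k s' G ?vs = wl k s' H ?ws"
   and hm: "image_mset (\<lambda>u. LTup (atp G (?vs @ [u]) # map (\<lambda>i. wl k s' G (?vs[i := u])) [0..<k])) (mset_set UNIV) =
       image_mset (\<lambda>u. LTup (atp H (?ws @ [u]) # map (\<lambda>i. wl k s' H (?ws[i := u])) [0..<k])) (mset_set UNIV)"
    using h unfolding s wl_Suc_eq by blast+
  have key: "sem G \<nu> (Sum j' \<psi>') = sem H \<mu> (Sum j' \<psi>')"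
    if j': "j' \<notin> set ps" "j' \<in> {1..k+1}" and \<psi>': "vars \<psi>' \<subseteq> {1..k+1}" "fv \<psi>' \<subseteq> set ps \<union> {j'}" "sdepth \<psi>' \<le> s'"
    for j' \<psi>'
  proof -
    have "(\<Sum>u\<in>UNIV. sem G (\<nu>(j' := u)) \<psi>') = (\<Sum>u\<in>UNIV. sem H (\<mu>(j' := u)) \<psi>')"
    proof (rule sum_mset_eq[OF _ _ hm])
      fix u u'
      assume e: "LTup (atp G (?vs @ [u]) # map (\<lambda>i. wl k s' G (?vs[i := u])) [0..<k]) =
                 LTup (atp H (?ws @ [u']) # map (\<lambda>i. wl k s' H (?ws[i := u'])) [0..<k])"
      then have ea: "atp G (?vs @ [u]) = atp H (?ws @ [u'])"
        and ew: "map (\<lambda>i. wl k s' G (?vs[i := u])) [0..<k] = map (\<lambda>i. wl k s' H (?ws[i := u'])) [0..<k]"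
        by auto
      have ew': "\<forall>i<k. wl k s' G (?vs[i := u]) = wl k s' H (?ws[i := u'])"
        using ew by (simp add: map_eq_conv)
      have m1: "map (\<nu>(j' := u)) (ps @ [j']) = ?vs @ [u]" "map (\<mu>(j' := u')) (ps @ [j']) = ?ws @ [u']"
        by (simp_all add: map_upd_notin[OF j'(1)])
      have m2: "map (\<nu>(j' := u)) (ps[i := j']) = ?vs[i := u]" "map (\<mu>(j' := u')) (ps[i := j']) = ?ws[i := u']" for i
        by (simp_all add: map_upd_notin[OF j'(1)] map_update)
      have m3: "map (\<nu>(j' := u)) ps = ?vs" "map (\<mu>(j' := u')) ps = ?ws"
        by (simp_all add: map_upd_notin[OF j'(1)])
      have p1: "atp G (map (\<nu>(j' := u)) (ps @ [j'])) = atp H (map (\<mu>(j' := u')) (ps @ [j']))"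
        unfolding m1 by (rule ea)
      have p2: "\<forall>i<k. wl k s' G (map (\<nu>(j' := u)) (ps[i := j'])) = wl k s' H (map (\<mu>(j' := u')) (ps[i := j']))"
        unfolding m2 by (rule ew')
      have p3: "wl k s' G (map (\<nu>(j' := u)) ps) = wl k s' H (map (\<mu>(j' := u')) ps)"
        unfolding m3 by (rule h')
      show "sem G (\<nu>(j' := u)) \<psi>' = sem H (\<mu>(j' := u')) \<psi>'"
        by (rule D[OF s ps j'(2) p1 p2 p3 \<psi>'])
    qed auto
    then show ?thesis by simp
  qed
  have vj: "j \<in> {1..k+1}" and v\<psi>: "vars \<psi> \<subseteq> {1..k+1}" using Sum.prems(1) by auto
  have f\<psi>: "fv \<psi> \<subseteq> set ps \<union> {j}" using Sum.prems(2) by auto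
  show ?case
  proof (cases "j \<in> set ps")
    case False
    then show ?thesis using key[OF False vj v\<psi> f\<psi> d\<psi>] by simp
  next
    case True
    have "\<exists>w. w \<in> {1..k+1} \<and> w \<notin> set ps"
    proof (rule ccontr)
      assume "\<not> ?thesis"
      then have "{1..k+1} \<subseteq> set ps" by auto
      then have "card {1..k+1} \<le> card (set ps)" using card_mono[of "set ps" "{1..k+1}"] by simp
      moreover have "card (set ps) \<le> k" using ps(1) card_length by metis
      ultimately show False by simp
    qed
    then obtain w where w: "w \<in> {1..k+1}" "w \<notin> set ps" by blast
    have wf: "w \<notin> fv (Sum j \<psi>)" using w(2) Sum.prems(2) by auto
    let ?\<psi> = "ren (sw j w) \<psi>"
    have "vars ?\<psi> \<subseteq> {1..k+1}"
      unfolding vars_ren using v\<psi> vj w(1) by (auto simp: sw_def)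
    moreover have "fv ?\<psi> \<subseteq> set ps \<union> {w}"
    proof
      fix y assume "y \<in> fv ?\<psi>"
      then obtain x where x: "x \<in> fv \<psi>" "y = sw j w x" unfolding fv_ren[OF inj_sw] by auto
      show "y \<in> set ps \<union> {w}"
      proof (cases "x = j")
        case True then show ?thesis using x by simp
      next
        case False
        then have "x \<in> set ps" "x \<noteq> w" using x f\<psi> w(2) by auto
        then show ?thesis using x False by simp
      qed
    qed
    moreover have "sdepth ?\<psi> \<le> s'" using d\<psi> by (simp add: sdepth_ren)
    ultimately have "sem G \<nu> (Sum w ?\<psi>) = sem H \<mu> (Sum w ?\<psi>)" using key w by blast
    then show ?thesis using sem_Sum_rename[OF wf] by metis
  qed
qed

lemma CD: "(\<forall>ps \<nu> \<mu> \<phi>. length ps = k \<longrightarrow> set ps \<subseteq> {1..k+1} \<longrightarrow> wl k s G (map \<nu> ps) = wl k s H (map \<mu> ps) \<longrightarrow>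
      vars \<phi> \<subseteq> {1..k+1} \<longrightarrow> fv \<phi> \<subseteq> set ps \<longrightarrow> sdepth \<phi> \<le> s \<longrightarrow> sem G \<nu> \<phi> = sem H \<mu> \<phi>) \<and>
   (\<forall>ps j \<nu> \<mu> \<psi>. length ps = k \<longrightarrow> set ps \<subseteq> {1..k+1} \<longrightarrow> j \<in> {1..k+1} \<longrightarrow>
      atp G (map \<nu> (ps @ [j])) = atp H (map \<mu> (ps @ [j])) \<longrightarrow>
      (\<forall>i<k. wl k s G (map \<nu> (ps[i := j])) = wl k s H (map \<mu> (ps[i := j]))) \<longrightarrow>
      wl k s G (map \<nu> ps) = wl k s H (map \<mu> ps) \<longrightarrow>
      vars \<psi> \<subseteq> {1..k+1} \<longrightarrow> fv \<psi> \<subseteq> set ps \<union> {j} \<longrightarrow> sdepth \<psi> \<le> s \<longrightarrow> sem G \<nu> \<psi> = sem H \<mu> \<psi>)"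
proof (induction s)
  case 0
  have C: "sem G \<nu> \<phi> = sem H \<mu> \<phi>" if "length ps = k" "set ps \<subseteq> {1..k+1}" "wl k 0 G (map \<nu> ps) = wl k 0 H (map \<mu> ps)"
      "vars \<phi> \<subseteq> {1..k+1}" "fv \<phi> \<subseteq> set ps" "sdepth \<phi> \<le> 0" for ps \<nu> \<mu> \<phi>
    by (rule C_of_D[OF _ that(1-3) that(4-6)]) simp
  show ?case
  proof (intro conjI allI impI)
    fix ps \<nu> \<mu> and \<phi> :: "'l tl" assume "length ps = k" "set ps \<subseteq> {1..k+1}" "wl k 0 G (map \<nu> ps) = wl k 0 H (map \<mu> ps)"
      "vars \<phi> \<subseteq> {1..k+1}" "fv \<phi> \<subseteq> set ps" "sdepth \<phi> \<le> 0"
    then show "sem G \<nu> \<phi> = sem H \<mu> \<phi>" by (rule C)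
  next
    fix ps j \<nu> \<mu> and \<psi> :: "'l tl"
    assume a: "length ps = k" "set ps \<subseteq> {1..k+1}" "j \<in> {1..k+1}"
      "atp G (map \<nu> (ps @ [j])) = atp H (map \<mu> (ps @ [j]))"
      "\<forall>i<k. wl k 0 G (map \<nu> (ps[i := j])) = wl k 0 H (map \<mu> (ps[i := j]))"
      "wl k 0 G (map \<nu> ps) = wl k 0 H (map \<mu> ps)"
      "vars \<psi> \<subseteq> {1..k+1}" "fv \<psi> \<subseteq> set ps \<union> {j}" "sdepth \<psi> \<le> 0"
    show "sem G \<nu> \<psi> = sem H \<mu> \<psi>"
      by (rule D_of_C[OF C a(1-6) a(7-9)]) 
  qed
next
  case (Suc s)
  have C: "sem G \<nu> \<phi> = sem H \<mu> \<phi>" if "length ps = k" "set ps \<subseteq> {1..k+1}" "wl k (Suc s) G (map \<nu> ps) = wl k (Suc s) H (map \<mu> ps)"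
      "vars \<phi> \<subseteq> {1..k+1}" "fv \<phi> \<subseteq> set ps" "sdepth \<phi> \<le> Suc s" for ps \<nu> \<mu> \<phi>
  proof (rule C_of_D[OF _ that(1-3) that(4-6)])
    fix s' ps j \<nu> \<mu> and \<psi> :: "'l tl"
    assume "Suc s = Suc s'" and r: "length ps = k" "set ps \<subseteq> {1..k+1}" "j \<in> {1..k+1}"
      "atp G (map \<nu> (ps @ [j])) = atp H (map \<mu> (ps @ [j]))"
      "\<forall>i<k. wl k s' G (map \<nu> (ps[i := j])) = wl k s' H (map \<mu> (ps[i := j]))"
      "wl k s' G (map \<nu> ps) = wl k s' H (map \<mu> ps)"
      "vars \<psi> \<subseteq> {1..k+1}" "fv \<psi> \<subseteq> set ps \<union> {j}" "sdepth \<psi> \<le> s'"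
    then have "s' = s" by simp
    then show "sem G \<nu> \<psi> = sem H \<mu> \<psi>" using Suc.IH r by blast
  qed
  show ?case
  proof (intro conjI allI impI)
    fix ps \<nu> \<mu> and \<phi> :: "'l tl" assume "length ps = k" "set ps \<subseteq> {1..k+1}" "wl k (Suc s) G (map \<nu> ps) = wl k (Suc s) H (map \<mu> ps)"
      "vars \<phi> \<subseteq> {1..k+1}" "fv \<phi> \<subseteq> set ps" "sdepth \<phi> \<le> Suc s"
    then show "sem G \<nu> \<phi> = sem H \<mu> \<phi>" by (rule C)
  next
    fix ps j \<nu> \<mu> and \<psi> :: "'l tl"
    assume a: "length ps = k" "set ps \<subseteq> {1..k+1}" "j \<in> {1..k+1}"
      "atp G (map \<nu> (ps @ [j])) = atp H (map \<mu> (ps @ [j]))"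
      "\<forall>i<k. wl k (Suc s) G (map \<nu> (ps[i := j])) = wl k (Suc s) H (map \<mu> (ps[i := j]))"
      "wl k (Suc s) G (map \<nu> ps) = wl k (Suc s) H (map \<mu> ps)"
      "vars \<psi> \<subseteq> {1..k+1}" "fv \<psi> \<subseteq> set ps \<union> {j}" "sdepth \<psi> \<le> Suc s"
    show "sem G \<nu> \<psi> = sem H \<mu> \<psi>"
      by (rule D_of_C[OF C a(1-6) a(7-9)])
  qed
qed

lemma wl_inv:
  assumes "length ps = k" "set ps \<subseteq> {1..k+1}" "wl k s G (map \<nu> ps) = wl k s H (map \<mu> ps)"
    "vars \<phi> \<subseteq> {1..k+1}" "fv \<phi> \<subseteq> set ps" "sdepth \<phi> \<le> s"
  shows "sem G \<nu> \<phi> = sem H \<mu> \<phi>"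
  using CD[of s] assms by blast

lemma wl_invD:
  assumes "length ps = k" "set ps \<subseteq> {1..k+1}" "j \<in> {1..k+1}"
      "atp G (map \<nu> (ps @ [j])) = atp H (map \<mu> (ps @ [j]))"
      "\<forall>i<k. wl k s G (map \<nu> (ps[i := j])) = wl k s H (map \<mu> (ps[i := j]))"
      "wl k s G (map \<nu> ps) = wl k s H (map \<mu> ps)"
      "vars \<psi> \<subseteq> {1..k+1}" "fv \<psi> \<subseteq> set ps \<union> {j}" "sdepth \<psi> \<le> s"
  shows "sem G \<nu> \<psi> = sem H \<mu> \<psi>"
  using CD[of s] assms by blast

end


definition bump :: "real list \<Rightarrow> real list \<Rightarrow> real" where
  "bump z ys = max 0 (1 - (\<Sum>i<length z. \<bar>ys ! i - z ! i\<bar>))"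

lemma ca_bump: "cont_arity (length z) (bump z)"
proof (rule lipschitz_cont_arity[of 1])
  fix x y :: "real list"
  let ?S = "\<lambda>ys. (\<Sum>i<length z. \<bar>ys ! i - z ! i\<bar>)"
  have 1: "?S y - ?S x \<le> (\<Sum>i<length z. \<bar>x ! i - y ! i\<bar>)"
    unfolding sum_subtractf[symmetric] by (intro sum_mono) linarith
  have 2: "?S x - ?S y \<le> (\<Sum>i<length z. \<bar>x ! i - y ! i\<bar>)"
    unfolding sum_subtractf[symmetric] by (intro sum_mono) linarith
  show "\<bar>bump z y - bump z x\<bar> \<le> 1 * (\<Sum>i<length z. \<bar>x ! i - y ! i\<bar>)"
    unfolding bump_def using 1 2 by (simp add: max_def abs_if)
qed simp

lemma bump_self: "bump z z = 1"
  unfolding bump_def by simp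

lemma count_sep:
  fixes P :: "'p set" and Lb :: "'p \<Rightarrow> 'b" and val :: "'f \<Rightarrow> 'p \<Rightarrow> real" and F :: "'f set"
    and sc :: "real \<Rightarrow> 'f \<Rightarrow> 'f"
  assumes P: "finite P" and p0: "p0 \<in> P" and f0: "f0 \<in> F"
    and inv: "\<And>p q f. p \<in> P \<Longrightarrow> q \<in> P \<Longrightarrow> Lb p = Lb q \<Longrightarrow> f \<in> F \<Longrightarrow> val f p = val f q"
    and sep: "\<And>p q. p \<in> P \<Longrightarrow> q \<in> P \<Longrightarrow> Lb p \<noteq> Lb q \<Longrightarrow> \<exists>f\<in>F. val f p \<noteq> val f q"
    and scF: "\<And>f c. f \<in> F \<Longrightarrow> sc c f \<in> F"
    and scv: "\<And>f c p. val (sc c f) p = c * val f p"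
  shows "\<exists>fs. fs \<noteq> [] \<and> set fs \<subseteq> F \<and>
    (\<forall>p\<in>P. bump (map (\<lambda>f. val f p0) fs) (map (\<lambda>f. val f p) fs) = (if Lb p = Lb p0 then 1 else 0))"
proof -
  define Q where "Q = {q \<in> P. Lb q \<noteq> Lb p0}"
  have "\<forall>q\<in>Q. \<exists>f. f \<in> F \<and> \<bar>val f q - val f p0\<bar> = 1"
  proof
    fix q assume q: "q \<in> Q"
    then obtain f where f: "f \<in> F" "val f q \<noteq> val f p0" using sep[of q p0] p0 unfolding Q_def by auto
    define c where "c = 1 / \<bar>val f q - val f p0\<bar>"
    have c0: "c \<ge> 0" unfolding c_def by simp
    have "val (sc c f) q - val (sc c f) p0 = c * (val f q - val f p0)"
      by (simp add: scv right_diff_distrib)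
    then have "\<bar>val (sc c f) q - val (sc c f) p0\<bar> = c * \<bar>val f q - val f p0\<bar>"
      using c0 by (simp add: abs_mult)
    also have "\<dots> = 1" unfolding c_def using f(2) by simp
    finally show "\<exists>f. f \<in> F \<and> \<bar>val f q - val f p0\<bar> = 1" using scF[OF f(1)] by blast
  qed
  then obtain g where g: "\<forall>q\<in>Q. g q \<in> F \<and> \<bar>val (g q) q - val (g q) p0\<bar> = 1"
    using bchoice[of Q "\<lambda>q f. f \<in> F \<and> \<bar>val f q - val f p0\<bar> = 1"] by blast
  obtain xs where xs: "set xs = Q" using P finite_list[of Q] unfolding Q_def by auto
  define fs where "fs = f0 # map g xs"
  have fsF: "set fs \<subseteq> F" unfolding fs_def using f0 g xs by auto
  have "bump (map (\<lambda>f. val f p0) fs) (map (\<lambda>f. val f p) fs) = (if Lb p = Lb p0 then 1 else 0)"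
    if p: "p \<in> P" for p
  proof (cases "Lb p = Lb p0")
    case True
    have eq: "map (\<lambda>f. val f p) fs = map (\<lambda>f. val f p0) fs"
      using inv[OF p p0 True] fsF by (intro map_cong) auto
    show ?thesis unfolding eq using True bump_self by simp
  next
    case False
    then have pQ: "p \<in> Q" unfolding Q_def using p by simp
    then obtain n where n: "n < length xs" "xs ! n = p" using xs by (metis in_set_conv_nth)
    have ln: "length (map (\<lambda>f. val f p0) fs) = length fs" by simp
    have "1 \<le> (\<Sum>i<length fs. \<bar>map (\<lambda>f. val f p) fs ! i - map (\<lambda>f. val f p0) fs ! i\<bar>)"
    proof -
      have "fs ! Suc n = g p" unfolding fs_def using n by simp
      moreover have "Suc n < length fs" unfolding fs_def using n by simp
      ultimately have "\<bar>map (\<lambda>f. val f p) fs ! Suc n - map (\<lambda>f. val f p0) fs ! Suc n\<bar> = 1"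
        using g pQ by simp
      moreover have "\<bar>map (\<lambda>f. val f p) fs ! Suc n - map (\<lambda>f. val f p0) fs ! Suc n\<bar> \<le>
          (\<Sum>i<length fs. \<bar>map (\<lambda>f. val f p) fs ! i - map (\<lambda>f. val f p0) fs ! i\<bar>)"
        using \<open>Suc n < length fs\<close> by (intro member_le_sum) auto
      ultimately show ?thesis by simp
    qed
    then show ?thesis using False unfolding bump_def ln by simp
  qed
  then show ?thesis using fsF unfolding fs_def by blast
qed

lemma sum_bump_card:
  assumes A: "finite A"
    and h: "\<And>u. u \<in> A \<Longrightarrow> b u = (if L u = l then 1 else (0::real))"
  shows "(\<Sum>u\<in>A. b u) = real (card {u \<in> A. L u = l})"
proof -
  have "(\<Sum>u\<in>A. b u) = (\<Sum>u\<in>A. if L u = l then 1 else 0)" using h by (intro sum.cong) auto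
  also have "\<dots> = real (card {u \<in> A. L u = l})"
    using sum.inter_filter[OF A, of "\<lambda>_. 1::real" "\<lambda>u. L u = l"] by simp
  finally show ?thesis .
qed

lemma mset_count_diff:
  assumes "image_mset f (mset_set A) \<noteq> image_mset g (mset_set B)" "finite A" "finite B"
  obtains l where "card {a \<in> A. f a = l} \<noteq> card {b \<in> B. g b = l}"
    "(\<exists>a\<in>A. f a = l) \<or> (\<exists>b\<in>B. g b = l)"
proof -
  have "\<exists>l. count (image_mset f (mset_set A)) l \<noteq> count (image_mset g (mset_set B)) l"
  proof (rule ccontr)
    assume "\<not> ?thesis"
    then have "image_mset f (mset_set A) = image_mset g (mset_set B)" by (simp add: multiset_eq_iff)
    then show False using assms(1) by simp
  qed
  then obtain l where l: "count (image_mset f (mset_set A)) l \<noteq> count (image_mset g (mset_set B)) l"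
    by blast
  then have c: "card {a \<in> A. f a = l} \<noteq> card {b \<in> B. g b = l}"
    using assms(2,3) by (simp add: count_image_mset_card)
  show ?thesis
  proof (cases "(\<exists>a\<in>A. f a = l) \<or> (\<exists>b\<in>B. g b = l)")
    case True then show ?thesis using that c by blast
  next
    case False
    then have e1: "{a \<in> A. f a = l} = {}" and e2: "{b \<in> B. g b = l} = {}" by auto
    show ?thesis using c unfolding e1 e2 by simp
  qed
qed


lemma gtl_ren12: "gtl i \<phi> \<Longrightarrow> gtl (sw 1 2 i) (ren (sw 1 2) \<phi>)"
proof (induction rule: gtl.induct)
  case (g_eq i) then show ?case by (auto intro!: gtl.g_eq simp: sw_def)
next
  case (g_neq i) then show ?case by (auto intro!: gtl.g_neq simp: sw_def)
next
  case (g_col i s) then show ?case by (auto intro!: gtl.g_col simp: sw_def)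
next
  case (g_mul i a b) then show ?case by (auto intro!: gtl.g_mul)
next
  case (g_add i a b) then show ?case by (auto intro!: gtl.g_add)
next
  case (g_scale i a c) then show ?case by (auto intro!: gtl.g_scale)
next
  case (g_app as i g)
  have "map (ren (sw 1 2)) as \<noteq> []" using g_app.hyps(1) by simp
  moreover have "\<forall>a\<in>set (map (ren (sw 1 2)) as). gtl (sw 1 2 i) a" using g_app.IH by auto
  ultimately show ?case by (simp add: gtl.g_app)
next
  case (g_sum i j a)
  have "{sw 1 2 i, sw 1 2 j} = {1, 2}" using g_sum.hyps(1) by (auto simp: sw_def doubleton_eq_iff)
  then show ?case using g_sum.IH by (simp add: gtl.g_sum)
qed

lemma sdepth_App_le: "(\<forall>a\<in>set as. sdepth a \<le> t) \<Longrightarrow> sdepth (App g as) \<le> t"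
  by (simp add: Max_le_iff)

lemma gtl_sep:
  fixes K :: "(real^'l::finite) set"
  shows "\<forall>(G :: ('n::finite,'l) graph) (H :: ('n,'l) graph) v w. is_graph K G \<longrightarrow> is_graph K H \<longrightarrow> cr t G v \<noteq> cr t H w \<longrightarrow>
     (\<exists>\<phi>. gtl 1 \<phi> \<and> omega_ok \<phi> \<and> sdepth \<phi> \<le> t \<and> sem G (\<lambda>_. v) \<phi> \<noteq> sem H (\<lambda>_. w) \<phi>)"
proof (induction t)
  case 0
  show ?case
  proof (intro allI impI)
    fix G H :: "('n,'l) graph" and v w
    assume "is_graph K G" "is_graph K H" "cr 0 G v \<noteq> cr 0 H w"
    then have "colG G v \<noteq> colG H w" by simp
    then obtain s where s: "colG G v $ s \<noteq> colG H w $ s" by (auto simp: vec_eq_iff)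
    have "gtl 1 (Pcol s 1)" by (rule g_col) simp
    then show "\<exists>\<phi>. gtl 1 \<phi> \<and> omega_ok \<phi> \<and> sdepth \<phi> \<le> 0 \<and> sem G (\<lambda>_. v) \<phi> \<noteq> sem H (\<lambda>_. w) \<phi>"
      using s by (intro exI[of _ "Pcol s 1"]) simp
  qed
next
  case (Suc t)
  show ?case
  proof (intro allI impI)
    fix G H :: "('n,'l) graph" and v w
    assume gG: "is_graph K G" and gH: "is_graph K H" and d: "cr (Suc t) G v \<noteq> cr (Suc t) H w"
    show "\<exists>\<phi>. gtl 1 \<phi> \<and> omega_ok \<phi> \<and> sdepth \<phi> \<le> Suc t \<and> sem G (\<lambda>_. v) \<phi> \<noteq> sem H (\<lambda>_. w) \<phi>"
    proof (cases "cr t G v = cr t H w")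
      case False
      then obtain \<phi> where "gtl 1 \<phi> \<and> omega_ok \<phi> \<and> sdepth \<phi> \<le> t \<and> sem G (\<lambda>_. v) \<phi> \<noteq> sem H (\<lambda>_. w) \<phi>"
        using Suc.IH gG gH by blast
      then show ?thesis by (intro exI[of _ \<phi>]) auto
    next
      case True
      define NG where "NG = {u. adjG G v u}"
      define NH where "NH = {u. adjG H w u}"
      have mne: "image_mset (cr t G) (mset_set NG) \<noteq> image_mset (cr t H) (mset_set NH)"
        using d True unfolding NG_def NH_def by simp
      obtain l where l: "card {a \<in> NG. cr t G a = l} \<noteq> card {b \<in> NH. cr t H b = l}"
        "(\<exists>a\<in>NG. cr t G a = l) \<or> (\<exists>b\<in>NH. cr t H b = l)"
        using mset_count_diff[OF mne] by auto
      define P where "P = (\<lambda>u::'n. (G, u)) ` UNIV \<union> (\<lambda>u::'n. (H, u)) ` UNIV"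
      define Lb where "Lb p = cr t (fst p) (snd p)" for p :: "('n,'l) graph \<times> 'n"
      define val where "val \<phi> p = sem (fst p) (\<lambda>_. snd p) \<phi>" for \<phi> and p :: "('n,'l) graph \<times> 'n"
      define F where "F = {\<phi> :: 'l tl. gtl 1 \<phi> \<and> omega_ok \<phi> \<and> sdepth \<phi> \<le> t}"
      have Pg: "is_graph K (fst p)" if "p \<in> P" for p using that gG gH unfolding P_def by auto
      have "\<exists>p0. p0 \<in> P \<and> Lb p0 = l"
      proof (cases "\<exists>a\<in>NG. cr t G a = l")
        case True
        then obtain a where "cr t G a = l" by blast
        then show ?thesis unfolding P_def Lb_def by (intro exI[of _ "(G, a)"]) auto
      next
        case False
        then obtain b where "cr t H b = l" using l(2) by blast
        then show ?thesis unfolding P_def Lb_def by (intro exI[of _ "(H, b)"]) auto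
      qed
      then obtain p0 where p0: "p0 \<in> P" "Lb p0 = l" by blast
      have "\<exists>fs. fs \<noteq> [] \<and> set fs \<subseteq> F \<and>
          (\<forall>p\<in>P. bump (map (\<lambda>f. val f p0) fs) (map (\<lambda>f. val f p) fs) = (if Lb p = Lb p0 then 1 else 0))"
      proof (rule count_sep[where sc = Scale])
        show "finite P" unfolding P_def by simp
        show "p0 \<in> P" by (rule p0(1))
        show "EqI 1 1 \<in> F" unfolding F_def by (auto intro: g_eq)
      next
        fix p q f assume p: "p \<in> P" and q: "q \<in> P" and e: "Lb p = Lb q" and f: "f \<in> F"
        show "val f p = val f q" unfolding val_def
          by (rule gtl_inv[OF Pg[OF p] Pg[OF q]]) (use f e in \<open>auto simp: F_def Lb_def\<close>)
      next
        fix p q assume p: "p \<in> P" and q: "q \<in> P" and e: "Lb p \<noteq> Lb q"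
        then obtain \<phi> where "gtl 1 \<phi> \<and> omega_ok \<phi> \<and> sdepth \<phi> \<le> t \<and> sem (fst p) (\<lambda>_. snd p) \<phi> \<noteq> sem (fst q) (\<lambda>_. snd q) \<phi>"
          using Suc.IH Pg[OF p] Pg[OF q] unfolding Lb_def by blast
        then show "\<exists>f\<in>F. val f p \<noteq> val f q" unfolding F_def val_def by blast
      next
        fix f c assume "f \<in> F" then show "Scale c f \<in> F" unfolding F_def by (auto intro: g_scale)
      next
        fix f c p show "val (Scale c f) p = c * val f p" unfolding val_def by simp
      qed
      then obtain fs where fs: "fs \<noteq> []" "set fs \<subseteq> F"
        "\<forall>p\<in>P. bump (map (\<lambda>f. val f p0) fs) (map (\<lambda>f. val f p) fs) = (if Lb p = Lb p0 then 1 else 0)"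
        by blast
      define z where "z = map (\<lambda>f. val f p0) fs"
      define \<psi> where "\<psi> = Sum 2 (Mul (Edge 1 2) (App (bump z) (map (ren (sw 1 2)) fs)))"
      have g2: "gtl 2 (App (bump z) (map (ren (sw 1 2)) fs))"
      proof (rule g_app)
        show "map (ren (sw 1 2)) fs \<noteq> []" using fs(1) by simp
        show "\<forall>a\<in>set (map (ren (sw 1 2)) fs). gtl 2 a"
          using fs(2) gtl_ren12[of 1] unfolding F_def by auto
      qed
      have gl: "gtl 1 \<psi>" unfolding \<psi>_def by (rule g_sum[OF _ g2]) auto
      have ok: "omega_ok \<psi>"
        unfolding \<psi>_def using fs(1,2) ca_bump[of z] unfolding F_def z_def
        by (auto simp: omega_ok_ren)
      have dp: "sdepth \<psi> \<le> Suc t"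
      proof -
        have "sdepth (App (bump z) (map (ren (sw 1 2)) fs)) \<le> t"
          by (rule sdepth_App_le) (use fs(2) in \<open>auto simp: F_def sdepth_ren\<close>)
        then show ?thesis unfolding \<psi>_def by simp
      qed
      have val_eq: "sem X (\<lambda>_. x) \<psi> = real (card {u \<in> {u. adjG X x u}. cr t X u = l})"
        if X: "X = G \<or> X = H" for X x
      proof -
        have inner: "map (sem X ((\<lambda>_. x)(2 := u))) (map (ren (sw 1 2)) fs) = map (\<lambda>f. val f (X, u)) fs" for u
        proof -
          have "sem X ((\<lambda>_. x)(2 := u)) (ren (sw 1 2) f) = val f (X, u)" if f: "f \<in> set fs" for f
          proof -
            have "fv f = {1}" using f fs(2) gtl_fv unfolding F_def by auto
            have "sem X ((\<lambda>_. x)(2 := u)) (ren (sw 1 2) f) = sem X (((\<lambda>_. x)(2 := u)) \<circ> sw 1 2) f"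
              by (rule sem_ren[OF inj_sw])
            also have "\<dots> = sem X (\<lambda>_. u) f"
              by (rule sem_fv) (simp add: \<open>fv f = {1}\<close>)
            finally show ?thesis unfolding val_def by simp
          qed
          then show ?thesis by simp
        qed
        have "sem X (\<lambda>_. x) \<psi> = (\<Sum>u\<in>UNIV. (if adjG X x u then 1 else 0) * bump z (map (\<lambda>f. val f (X, u)) fs))"
          unfolding \<psi>_def using inner by (simp cong: map_cong)
        also have "\<dots> = (\<Sum>u\<in>{u. adjG X x u}. bump z (map (\<lambda>f. val f (X, u)) fs))"
          by (rule sum_adj)
        also have "\<dots> = real (card {u \<in> {u. adjG X x u}. cr t X u = l})"
        proof (rule sum_bump_card)
          fix u assume "u \<in> {u. adjG X x u}"
          have "(X, u) \<in> P" using X unfolding P_def by auto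
          then show "bump z (map (\<lambda>f. val f (X, u)) fs) = (if cr t X u = l then 1 else 0)"
            using fs(3) p0(2) unfolding z_def Lb_def by simp
        qed simp
        finally show ?thesis .
      qed
      have "sem G (\<lambda>_. v) \<psi> \<noteq> sem H (\<lambda>_. w) \<psi>"
        using val_eq[of G v] val_eq[of H w] l(1) unfolding NG_def NH_def by simp
      then show ?thesis using gl ok dp by blast
    qed
  qed
qed


lemma atp_sep:
  fixes G H :: "('n::finite,'l::finite) graph"
  assumes d: "atp G (map \<nu> qs) \<noteq> atp H (map \<mu> qs)"
  shows "\<exists>\<phi>. vars \<phi> \<subseteq> set qs \<and> fv \<phi> \<subseteq> set qs \<and> sdepth \<phi> = 0 \<and> omega_ok \<phi> \<and> sem G \<nu> \<phi> \<noteq> sem H \<mu> \<phi>"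
proof (rule ccontr)
  assume na: "\<not> ?thesis"
  have eqs: "(\<nu> a = \<nu> b \<longleftrightarrow> \<mu> a = \<mu> b)" if "a \<in> set qs" "b \<in> set qs" for a b
  proof -
    have "sem G \<nu> (EqI a b) = sem H \<mu> (EqI a b)" using na that by (metis fv.simps(1) vars.simps(1) sdepth.simps(1) omega_ok.simps(6) empty_subsetI insert_subset)
    then show ?thesis by (simp split: if_splits)
  qed
  have adjs: "(adjG G (\<nu> a) (\<nu> b) \<longleftrightarrow> adjG H (\<mu> a) (\<mu> b))" if "a \<in> set qs" "b \<in> set qs" for a b
  proof -
    have "sem G \<nu> (Edge a b) = sem H \<mu> (Edge a b)" using na that by (metis fv.simps(3) vars.simps(3) sdepth.simps(3) omega_ok.simps(8) empty_subsetI insert_subset)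
    then show ?thesis by (simp split: if_splits)
  qed
  have cols: "colG G (\<nu> a) = colG H (\<mu> a)" if "a \<in> set qs" for a
  proof -
    have "sem G \<nu> (Pcol s a) = sem H \<mu> (Pcol s a)" for s using na that by (metis fv.simps(4) vars.simps(4) sdepth.simps(4) omega_ok.simps(9) empty_subsetI insert_subset)
    then show ?thesis by (simp add: vec_eq_iff)
  qed
  have "atp G (map \<nu> qs) = atp H (map \<mu> qs)"
    unfolding atp_eq_iff using eqs adjs cols by (auto simp: nth_mem)
  then show False using d by simp
qed

lemma exists_free_var:
  assumes "length ps = k" "set ps \<subseteq> {1..k+1}"
  shows "\<exists>w. w \<in> {1..k+1} \<and> w \<notin> set ps"
proof (rule ccontr)
  assume "\<not> ?thesis"
  then have "{1..k+1} \<subseteq> set ps" by auto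
  then have "card {1..k+1} \<le> card (set ps)" using card_mono[of "set ps" "{1..k+1}"] by simp
  moreover have "card (set ps) \<le> k" using assms(1) card_length by metis
  ultimately show False by simp
qed

lemma LTup_eq: "LTup (a # map f [0..<k]) = LTup (a' # map f' [0..<k]) \<longleftrightarrow> a = a' \<and> (\<forall>i<k. f i = f' i)"
  by (auto simp: map_eq_conv)

lemma wl_sep:
  fixes K :: "(real^'l::finite) set"
  assumes k: "k \<ge> 1"
  shows "\<forall>(G :: ('n::finite,'l) graph) (H :: ('n,'l) graph) ps \<nu> \<mu>. is_graph K G \<longrightarrow> is_graph K H \<longrightarrow>
     length ps = k \<longrightarrow> set ps \<subseteq> {1..k+1} \<longrightarrow> wl k t G (map \<nu> ps) \<noteq> wl k t H (map \<mu> ps) \<longrightarrow>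
     (\<exists>\<phi>. vars \<phi> \<subseteq> {1..k+1} \<and> omega_ok \<phi> \<and> fv \<phi> \<subseteq> set ps \<and> sdepth \<phi> \<le> t \<and> sem G \<nu> \<phi> \<noteq> sem H \<mu> \<phi>)"
proof (induction t)
  case 0
  show ?case
  proof (intro allI impI)
    fix G H :: "('n,'l) graph" and ps \<nu> \<mu>
    assume "is_graph K G" "is_graph K H" and ps: "length ps = k" "set ps \<subseteq> {1..k+1}"
      and d: "wl k 0 G (map \<nu> ps) \<noteq> wl k 0 H (map \<mu> ps)"
    then obtain \<phi> where "vars \<phi> \<subseteq> set ps \<and> fv \<phi> \<subseteq> set ps \<and> sdepth \<phi> = 0 \<and> omega_ok \<phi> \<and> sem G \<nu> \<phi> \<noteq> sem H \<mu> \<phi>"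
      using atp_sep[of G \<nu> ps H \<mu>] by auto
    then show "\<exists>\<phi>. vars \<phi> \<subseteq> {1..k+1} \<and> omega_ok \<phi> \<and> fv \<phi> \<subseteq> set ps \<and> sdepth \<phi> \<le> 0 \<and> sem G \<nu> \<phi> \<noteq> sem H \<mu> \<phi>"
      using ps(2) by (intro exI[of _ \<phi>]) auto
  qed
next
  case (Suc t)
  show ?case
  proof (intro allI impI)
    fix G H :: "('n,'l) graph" and ps \<nu> \<mu>
    assume gG: "is_graph K G" and gH: "is_graph K H" and ps: "length ps = k" "set ps \<subseteq> {1..k+1}"
      and d: "wl k (Suc t) G (map \<nu> ps) \<noteq> wl k (Suc t) H (map \<mu> ps)"
    show "\<exists>\<phi>. vars \<phi> \<subseteq> {1..k+1} \<and> omega_ok \<phi> \<and> fv \<phi> \<subseteq> set ps \<and> sdepth \<phi> \<le> Suc t \<and> sem G \<nu> \<phi> \<noteq> sem H \<mu> \<phi>"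
    proof (cases "wl k t G (map \<nu> ps) = wl k t H (map \<mu> ps)")
      case False
      then obtain \<phi> where "vars \<phi> \<subseteq> {1..k+1} \<and> omega_ok \<phi> \<and> fv \<phi> \<subseteq> set ps \<and> sdepth \<phi> \<le> t \<and> sem G \<nu> \<phi> \<noteq> sem H \<mu> \<phi>"
        using Suc.IH gG gH ps by blast
      then show ?thesis by (intro exI[of _ \<phi>]) auto
    next
      case True
      let ?vs = "map \<nu> ps" and ?ws = "map \<mu> ps"
      define c where "c = wl k t G ?vs"
      have cH: "wl k t H ?ws = c" using True unfolding c_def by simp
      define TG where "TG u = LTup (atp G (?vs @ [u]) # map (\<lambda>i. wl k t G (?vs[i := u])) [0..<k])" for u
      define TH where "TH u = LTup (atp H (?ws @ [u]) # map (\<lambda>i. wl k t H (?ws[i := u])) [0..<k])" for u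
      have mne: "image_mset TG (mset_set UNIV) \<noteq> image_mset TH (mset_set UNIV)"
        using d True unfolding TG_def TH_def wl_Suc_eq by blast
      obtain l where l: "card {a \<in> UNIV. TG a = l} \<noteq> card {b \<in> UNIV. TH b = l}"
        "(\<exists>a\<in>UNIV. TG a = l) \<or> (\<exists>b\<in>UNIV. TH b = l)"
        using mset_count_diff[OF mne] by auto
      obtain w where w: "w \<in> {1..k+1}" "w \<notin> set ps" using exists_free_var[OF ps] by blast
      define P where "P = (\<lambda>u. (G, \<nu>(w := u))) ` UNIV \<union> (\<lambda>u. (H, \<mu>(w := u))) ` UNIV"
      define Lb where "Lb p = (LTup (atp (fst p) (map (snd p) (ps @ [w])) #
           map (\<lambda>i. wl k t (fst p) (map (snd p) (ps[i := w]))) [0..<k]), wl k t (fst p) (map (snd p) ps))"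
        for p :: "('n,'l) graph \<times> (nat \<Rightarrow> 'n)"
      define val where "val \<phi> p = sem (fst p) (snd p) \<phi>" for \<phi> and p :: "('n,'l) graph \<times> (nat \<Rightarrow> 'n)"
      define F where "F = {\<phi> :: 'l tl. vars \<phi> \<subseteq> {1..k+1} \<and> omega_ok \<phi> \<and> fv \<phi> \<subseteq> set ps \<union> {w} \<and> sdepth \<phi> \<le> t}"
      have LbG: "Lb (G, \<nu>(w := u)) = (TG u, c)" for u
        unfolding Lb_def TG_def c_def by (simp add: map_update map_upd_notin[OF w(2)])
      have LbH: "Lb (H, \<mu>(w := u)) = (TH u, c)" for u
        unfolding Lb_def TH_def using cH by (simp add: map_update map_upd_notin[OF w(2)])
      have Pg: "is_graph K (fst p)" if "p \<in> P" for p using that gG gH unfolding P_def by auto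
      have "\<exists>p0. p0 \<in> P \<and> Lb p0 = (l, c)"
      proof (cases "\<exists>a. TG a = l")
        case True
        then obtain a where "TG a = l" by blast
        then show ?thesis unfolding P_def using LbG by (intro exI[of _ "(G, \<nu>(w := a))"]) auto
      next
        case False
        then obtain b where "TH b = l" using l(2) by blast
        then show ?thesis unfolding P_def using LbH by (intro exI[of _ "(H, \<mu>(w := b))"]) auto
      qed
      then obtain p0 where p0: "p0 \<in> P" "Lb p0 = (l, c)" by blast
      have "\<exists>fs. fs \<noteq> [] \<and> set fs \<subseteq> F \<and>
          (\<forall>p\<in>P. bump (map (\<lambda>f. val f p0) fs) (map (\<lambda>f. val f p) fs) = (if Lb p = Lb p0 then 1 else 0))"
      proof (rule count_sep[where sc = Scale])
        show "finite P" unfolding P_def by simp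
        show "p0 \<in> P" by (rule p0(1))
        show "EqI w w \<in> F" unfolding F_def using w(1) by auto
      next
        fix p q f assume p: "p \<in> P" and q: "q \<in> P" and e: "Lb p = Lb q" and f: "f \<in> F"
        from e have e1: "atp (fst p) (map (snd p) (ps @ [w])) = atp (fst q) (map (snd q) (ps @ [w]))"
          and e2: "\<forall>i<k. wl k t (fst p) (map (snd p) (ps[i := w])) = wl k t (fst q) (map (snd q) (ps[i := w]))"
          and e3: "wl k t (fst p) (map (snd p) ps) = wl k t (fst q) (map (snd q) ps)"
          unfolding Lb_def LTup_eq by auto
        show "val f p = val f q" unfolding val_def
          by (rule wl_invD[OF k Pg[OF p] Pg[OF q] ps w(1) e1 e2 e3]) (use f in \<open>auto simp: F_def\<close>)
      next
        fix p q assume p: "p \<in> P" and q: "q \<in> P" and e: "Lb p \<noteq> Lb q"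
        then consider (a) "atp (fst p) (map (snd p) (ps @ [w])) \<noteq> atp (fst q) (map (snd q) (ps @ [w]))"
          | (b) i where "i < k" "wl k t (fst p) (map (snd p) (ps[i := w])) \<noteq> wl k t (fst q) (map (snd q) (ps[i := w]))"
          | (c) "wl k t (fst p) (map (snd p) ps) \<noteq> wl k t (fst q) (map (snd q) ps)"
          unfolding Lb_def LTup_eq by auto
        then show "\<exists>f\<in>F. val f p \<noteq> val f q"
        proof cases
          case a
          then obtain \<phi> where \<phi>: "vars \<phi> \<subseteq> set (ps @ [w]) \<and> fv \<phi> \<subseteq> set (ps @ [w]) \<and> sdepth \<phi> = 0 \<and> omega_ok \<phi> \<and>
              sem (fst p) (snd p) \<phi> \<noteq> sem (fst q) (snd q) \<phi>"
            using atp_sep by blast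
          then have "\<phi> \<in> F" unfolding F_def using ps(2) w(1) by auto
          then show ?thesis using \<phi> unfolding val_def by blast
        next
          case (b i)
          have "length (ps[i := w]) = k" "set (ps[i := w]) \<subseteq> {1..k+1}"
            using ps w(1) set_update_subset_insert[of ps i w] by auto
          then obtain \<phi> where \<phi>: "vars \<phi> \<subseteq> {1..k+1} \<and> omega_ok \<phi> \<and> fv \<phi> \<subseteq> set (ps[i := w]) \<and> sdepth \<phi> \<le> t \<and>
              sem (fst p) (snd p) \<phi> \<noteq> sem (fst q) (snd q) \<phi>"
            using Suc.IH Pg[OF p] Pg[OF q] b(2) by blast
          then have "\<phi> \<in> F" unfolding F_def using set_update_subset_insert[of ps i w] by auto
          then show ?thesis using \<phi> unfolding val_def by blast
        next
          case c
          then obtain \<phi> where \<phi>: "vars \<phi> \<subseteq> {1..k+1} \<and> omega_ok \<phi> \<and> fv \<phi> \<subseteq> set ps \<and> sdepth \<phi> \<le> t \<and>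
              sem (fst p) (snd p) \<phi> \<noteq> sem (fst q) (snd q) \<phi>"
            using Suc.IH Pg[OF p] Pg[OF q] ps by blast
          then have "\<phi> \<in> F" unfolding F_def by auto
          then show ?thesis using \<phi> unfolding val_def by blast
        qed
      next
        fix f c assume "f \<in> F" then show "Scale c f \<in> F" unfolding F_def by auto
      next
        fix f c p show "val (Scale c f) p = c * val f p" unfolding val_def by simp
      qed
      then obtain fs where fs: "fs \<noteq> []" "set fs \<subseteq> F"
        "\<forall>p\<in>P. bump (map (\<lambda>f. val f p0) fs) (map (\<lambda>f. val f p) fs) = (if Lb p = Lb p0 then 1 else 0)"
        by blast
      define z where "z = map (\<lambda>f. val f p0) fs"
      define \<psi> where "\<psi> = Sum w (App (bump z) fs)"
      have vs: "vars \<psi> \<subseteq> {1..k+1}" unfolding \<psi>_def using fs(2) w(1) unfolding F_def by auto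
      have ok: "omega_ok \<psi>" unfolding \<psi>_def using fs(1,2) ca_bump[of z] unfolding F_def z_def by auto
      have fvs: "fv \<psi> \<subseteq> set ps" unfolding \<psi>_def using fs(2) unfolding F_def by auto
      have dp: "sdepth \<psi> \<le> Suc t"
      proof -
        have "sdepth (App (bump z) fs) \<le> t"
          by (rule sdepth_App_le) (use fs(2) in \<open>auto simp: F_def\<close>)
        then show ?thesis unfolding \<psi>_def by simp
      qed
      have val_eq: "sem X \<rho> \<psi> = real (card {u \<in> UNIV. Lb (X, \<rho>(w := u)) = (l, c)})"
        if X: "(\<lambda>u. (X, \<rho>(w := u))) ` UNIV \<subseteq> P" for X \<rho>
      proof -
        have "sem X \<rho> \<psi> = (\<Sum>u\<in>UNIV. bump z (map (\<lambda>f. val f (X, \<rho>(w := u))) fs))"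
          unfolding \<psi>_def val_def by (simp cong: map_cong)
        also have "\<dots> = real (card {u \<in> UNIV. Lb (X, \<rho>(w := u)) = (l, c)})"
        proof (rule sum_bump_card)
          fix u :: 'n
          have "(X, \<rho>(w := u)) \<in> P" using X by auto
          then show "bump z (map (\<lambda>f. val f (X, \<rho>(w := u))) fs) = (if Lb (X, \<rho>(w := u)) = (l, c) then 1 else 0)"
            using fs(3) p0(2) unfolding z_def by simp
        qed simp
        finally show ?thesis .
      qed
      have "sem G \<nu> \<psi> = real (card {u \<in> UNIV. TG u = l})"
        using val_eq[of G \<nu>] unfolding P_def LbG by auto
      moreover have "sem H \<mu> \<psi> = real (card {u \<in> UNIV. TH u = l})"
        using val_eq[of H \<mu>] unfolding P_def LbH by auto
      ultimately have "sem G \<nu> \<psi> \<noteq> sem H \<mu> \<psi>" using l(1) by simp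
      then show ?thesis using vs ok fvs dp by blast
    qed
  qed
qed


lemma finite_tuples: "finite {vs :: 'a::finite list. length vs = n}"
  using finite_lists_length_eq[of "UNIV :: 'a set" n] by simp

fun nest :: "nat \<Rightarrow> 'l tl \<Rightarrow> 'l tl" where
  "nest 0 \<gamma> = \<gamma>"
| "nest (Suc n) \<gamma> = nest n (Sum (Suc n) \<gamma>)"

definition ovr :: "nat \<Rightarrow> (nat \<Rightarrow> 'a) \<Rightarrow> 'a list \<Rightarrow> nat \<Rightarrow> 'a" where
  "ovr n \<nu> vs i = (if 1 \<le> i \<and> i \<le> n then vs ! (i - 1) else \<nu> i)"

lemma sum_lists_Suc:
  "(\<Sum>vs\<in>{vs :: 'a::finite list. length vs = Suc n}. f vs) =
   (\<Sum>vs\<in>{vs :: 'a list. length vs = n}. \<Sum>u\<in>UNIV. f (vs @ [u]))"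
proof -
  let ?A = "{vs :: 'a list. length vs = n}"
  let ?h = "\<lambda>(vs, u). vs @ [u :: 'a]"
  have inj: "inj_on ?h (?A \<times> UNIV)" by (auto simp: inj_on_def)
  have img: "?h ` (?A \<times> UNIV) = {vs. length vs = Suc n}"
  proof
    show "?h ` (?A \<times> UNIV) \<subseteq> {vs. length vs = Suc n}" by auto
    show "{vs. length vs = Suc n} \<subseteq> ?h ` (?A \<times> UNIV)"
    proof
      fix xs :: "'a list" assume xs: "xs \<in> {vs. length vs = Suc n}"
      then have "xs = butlast xs @ [last xs]" by (metis append_butlast_last_id length_0_conv mem_Collect_eq nat.distinct(1))
      moreover have "butlast xs \<in> ?A" using xs by simp
      ultimately show "xs \<in> ?h ` (?A \<times> UNIV)" by (metis (no_types, lifting) SigmaI UNIV_I case_prod_conv image_eqI)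
    qed
  qed
  have "(\<Sum>vs\<in>?A. \<Sum>u\<in>UNIV. f (vs @ [u])) = (\<Sum>p\<in>?A \<times> UNIV. f (?h p))"
    by (simp add: sum.cartesian_product case_prod_beta)
  also have "\<dots> = (\<Sum>xs\<in>?h ` (?A \<times> UNIV). f xs)"
    using sum.reindex[OF inj, of f] by (simp add: o_def)
  also have "\<dots> = (\<Sum>vs\<in>{vs. length vs = Suc n}. f vs)" unfolding img ..
  finally show ?thesis by simp
qed

lemma sem_nest: "sem G \<nu> (nest n \<gamma>) = (\<Sum>vs\<in>{vs. length vs = n}. sem G (ovr n \<nu> vs) \<gamma>)"
proof (induction n arbitrary: \<gamma>)
  case 0
  have "{vs :: 'a list. length vs = 0} = {[]}" by auto
  moreover have "ovr 0 \<nu> [] = \<nu>" by (auto simp: ovr_def)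
  ultimately show ?case by simp
next
  case (Suc n)
  have upd: "(ovr n \<nu> vs)(Suc n := u) = ovr (Suc n) \<nu> (vs @ [u])" if "length vs = n" for vs u
    using that by (auto simp: ovr_def fun_eq_iff nth_append)
  have "sem G \<nu> (nest (Suc n) \<gamma>) = (\<Sum>vs\<in>{vs. length vs = n}. \<Sum>u\<in>UNIV. sem G ((ovr n \<nu> vs)(Suc n := u)) \<gamma>)"
    using Suc by simp
  also have "\<dots> = (\<Sum>vs\<in>{vs. length vs = n}. \<Sum>u\<in>UNIV. sem G (ovr (Suc n) \<nu> (vs @ [u])) \<gamma>)"
    using upd by (intro sum.cong) auto
  also have "\<dots> = (\<Sum>vs\<in>{vs. length vs = Suc n}. sem G (ovr (Suc n) \<nu> vs) \<gamma>)"
    by (rule sum_lists_Suc[symmetric])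
  finally show ?case .
qed

lemma vars_nest: "vars (nest n \<gamma>) = {1..n} \<union> vars \<gamma>"
  by (induction n arbitrary: \<gamma>) (auto simp: atLeastAtMostSuc_conv)

lemma fv_nest: "fv (nest n \<gamma>) = fv \<gamma> - {1..n}"
  by (induction n arbitrary: \<gamma>) (auto simp: atLeastAtMostSuc_conv)

lemma sdepth_nest: "sdepth (nest n \<gamma>) = n + sdepth \<gamma>"
  by (induction n arbitrary: \<gamma>) auto

lemma omega_nest: "omega_ok (nest n \<gamma>) = omega_ok \<gamma>"
  by (induction n arbitrary: \<gamma>) auto

definition asg :: "'a list \<Rightarrow> nat \<Rightarrow> 'a" where "asg vs i = vs ! (i - 1)"

lemma map_asg:
  assumes "length vs = k" shows "map (asg vs) [1..<k+1] = vs"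
proof -
  have e: "[1..<k+1] = map Suc [0..<k]" using map_Suc_upt[of 0 k] by simp
  have "map (asg vs) (map Suc [0..<k]) = map (\<lambda>i. vs ! i) [0..<k]" by (simp add: asg_def)
  also have "\<dots> = vs" using assms map_nth by blast
  finally show ?thesis unfolding e .
qed

lemma gwl_sep:
  fixes K :: "(real^'l::finite) set" and G H :: "('n::finite,'l) graph"
  assumes k: "k \<ge> 1" and gG: "is_graph K G" and gH: "is_graph K H" and d: "gwl k t G \<noteq> gwl k t H"
  shows "\<exists>\<phi>. vars \<phi> \<subseteq> {1..k+1} \<and> omega_ok \<phi> \<and> fv \<phi> = {} \<and> sdepth \<phi> \<le> t + k \<and> sem G \<nu>0 \<phi> \<noteq> sem H \<mu>0 \<phi>"
proof -
  define TU where "TU = {vs :: 'n list. length vs = k}"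
  have fTU: "finite TU" unfolding TU_def by (rule finite_tuples)
  have mne: "image_mset (wl k t G) (mset_set TU) \<noteq> image_mset (wl k t H) (mset_set TU)"
    using d unfolding gwl_def TU_def by simp
  obtain l where l: "card {a \<in> TU. wl k t G a = l} \<noteq> card {b \<in> TU. wl k t H b = l}"
      "(\<exists>a\<in>TU. wl k t G a = l) \<or> (\<exists>b\<in>TU. wl k t H b = l)"
    using mset_count_diff[OF mne fTU fTU] by blast
  define ps where "ps = [1..<k+1]"
  have ps: "length ps = k" "set ps \<subseteq> {1..k+1}" "set ps = {1..k}" unfolding ps_def by auto
  define P where "P = (\<lambda>vs. (G, asg vs)) ` TU \<union> (\<lambda>vs. (H, asg vs)) ` TU"
  define Lb where "Lb p = wl k t (fst p) (map (snd p) ps)" for p :: "('n,'l) graph \<times> (nat \<Rightarrow> 'n)"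
  define val where "val \<phi> p = sem (fst p) (snd p) \<phi>" for \<phi> and p :: "('n,'l) graph \<times> (nat \<Rightarrow> 'n)"
  define F where "F = {\<phi> :: 'l tl. vars \<phi> \<subseteq> {1..k+1} \<and> omega_ok \<phi> \<and> fv \<phi> \<subseteq> set ps \<and> sdepth \<phi> \<le> t}"
  have LbA: "Lb (X, asg vs) = wl k t X vs" if "vs \<in> TU" for X vs
  proof -
    have "map (asg vs) ps = vs" unfolding ps_def using that map_asg unfolding TU_def by blast
    then show ?thesis unfolding Lb_def by simp
  qed
  have Pg: "is_graph K (fst p)" if "p \<in> P" for p using that gG gH unfolding P_def by auto
  have "\<exists>p0. p0 \<in> P \<and> Lb p0 = l"
  proof (cases "\<exists>a\<in>TU. wl k t G a = l")
    case True
    then obtain a where "a \<in> TU" "wl k t G a = l" by blast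
    then show ?thesis unfolding P_def using LbA by (intro exI[of _ "(G, asg a)"]) auto
  next
    case False
    then obtain b where "b \<in> TU" "wl k t H b = l" using l(2) by blast
    then show ?thesis unfolding P_def using LbA by (intro exI[of _ "(H, asg b)"]) auto
  qed
  then obtain p0 where p0: "p0 \<in> P" "Lb p0 = l" by blast
  have "\<exists>fs. fs \<noteq> [] \<and> set fs \<subseteq> F \<and>
      (\<forall>p\<in>P. bump (map (\<lambda>f. val f p0) fs) (map (\<lambda>f. val f p) fs) = (if Lb p = Lb p0 then 1 else 0))"
  proof (rule count_sep[where sc = Scale])
    show "finite P" unfolding P_def using fTU by simp
    show "p0 \<in> P" by (rule p0(1))
    show "EqI 1 1 \<in> F" unfolding F_def using ps(3) k by auto
  next
    fix p q f assume p: "p \<in> P" and q: "q \<in> P" and e: "Lb p = Lb q" and f: "f \<in> F"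
    show "val f p = val f q" unfolding val_def
      by (rule wl_inv[OF k Pg[OF p] Pg[OF q] ps(1,2)]) (use f e in \<open>auto simp: F_def Lb_def\<close>)
  next
    fix p q assume p: "p \<in> P" and q: "q \<in> P" and e: "Lb p \<noteq> Lb q"
    then obtain \<phi> where \<phi>: "vars \<phi> \<subseteq> {1..k+1} \<and> omega_ok \<phi> \<and> fv \<phi> \<subseteq> set ps \<and> sdepth \<phi> \<le> t \<and>
        sem (fst p) (snd p) \<phi> \<noteq> sem (fst q) (snd q) \<phi>"
      using wl_sep[OF k, of K t] Pg[OF p] Pg[OF q] ps(1,2) unfolding Lb_def by blast
    then show "\<exists>f\<in>F. val f p \<noteq> val f q" unfolding F_def val_def by blast
  next
    fix f c assume "f \<in> F" then show "Scale c f \<in> F" unfolding F_def by auto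
  next
    fix f c p show "val (Scale c f) p = c * val f p" unfolding val_def by simp
  qed
  then obtain fs where fs: "fs \<noteq> []" "set fs \<subseteq> F"
    "\<forall>p\<in>P. bump (map (\<lambda>f. val f p0) fs) (map (\<lambda>f. val f p) fs) = (if Lb p = Lb p0 then 1 else 0)"
    by blast
  define z where "z = map (\<lambda>f. val f p0) fs"
  define \<psi> where "\<psi> = nest k (App (bump z) fs)"
  have vs: "vars \<psi> \<subseteq> {1..k+1}" unfolding \<psi>_def vars_nest using fs(2) unfolding F_def by auto
  have ok: "omega_ok \<psi>" unfolding \<psi>_def omega_nest using fs(1,2) ca_bump[of z] unfolding F_def z_def by auto
  have fvs: "fv \<psi> = {}" unfolding \<psi>_def fv_nest using fs(2) ps(3) unfolding F_def by auto
  have dp: "sdepth \<psi> \<le> t + k"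
  proof -
    have "sdepth (App (bump z) fs) \<le> t"
      by (rule sdepth_App_le) (use fs(2) in \<open>auto simp: F_def\<close>)
    then show ?thesis unfolding \<psi>_def sdepth_nest by simp
  qed
  have val_eq: "sem X \<rho> \<psi> = real (card {vs \<in> TU. wl k t X vs = l})"
    if X: "X = G \<or> X = H" for X \<rho>
  proof -
    have inner: "sem X (ovr k \<rho> vs) f = val f (X, asg vs)" if f: "f \<in> set fs" for f vs
    proof -
      have "fv f \<subseteq> {1..k}" using f fs(2) ps(3) unfolding F_def by auto
      then show ?thesis unfolding val_def by (auto intro!: sem_fv simp: ovr_def asg_def)
    qed
    have "sem X \<rho> \<psi> = (\<Sum>vs\<in>TU. bump z (map (\<lambda>f. val f (X, asg vs)) fs))"
      unfolding \<psi>_def sem_nest TU_def using inner by (simp cong: map_cong)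
    also have "\<dots> = real (card {vs \<in> TU. wl k t X vs = l})"
    proof (rule sum_bump_card[OF fTU])
      fix vs assume vs: "vs \<in> TU"
      have "(X, asg vs) \<in> P" using X vs unfolding P_def by auto
      then show "bump z (map (\<lambda>f. val f (X, asg vs)) fs) = (if wl k t X vs = l then 1 else 0)"
        using fs(3) p0(2) LbA[OF vs] unfolding z_def by simp
    qed
    finally show ?thesis .
  qed
  have "sem G \<nu>0 \<psi> \<noteq> sem H \<mu>0 \<psi>" using val_eq[of G] val_eq[of H] l(1) by simp
  then show ?thesis using vs ok fvs dp by blast
qed

fun lbase :: "'c lab \<Rightarrow> 'c lab" where
  "lbase (LPair a b) = lbase a"
| "lbase (LCol c) = LCol c"
| "lbase (LAtp e c) = LAtp e c"
| "lbase (LTup l) = LTup l"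

fun isdiag :: "'c lab \<Rightarrow> bool" where
  "isdiag (LAtp e c) = (\<forall>p\<in>set e. fst p)"
| "isdiag _ = False"

lemma lbase_wl: "lbase (wl k t G vs) = atp G vs"
  by (induction t) (auto simp: atp_def)

lemma isdiag_atp: "isdiag (atp G vs) \<longleftrightarrow> (\<forall>i j. i < j \<and> j < length vs \<longrightarrow> vs ! i = vs ! j)"
  unfolding atp_alt by (auto simp: set_pidx)

lemma diag_rep:
  assumes "length vs = k" "k \<ge> 1"
  shows "(\<forall>i j. i < j \<and> j < length vs \<longrightarrow> vs ! i = vs ! j) \<longleftrightarrow> vs = replicate k (vs ! 0)"
proof
  assume a: "\<forall>i j. i < j \<and> j < length vs \<longrightarrow> vs ! i = vs ! j"
  show "vs = replicate k (vs ! 0)"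
  proof (rule nth_equalityI)
    show "length vs = length (replicate k (vs ! 0))" using assms by simp
    fix i assume i: "i < length vs"
    show "vs ! i = replicate k (vs ! 0) ! i"
    proof (cases "i = 0")
      case True then show ?thesis using i assms by simp
    next
      case False
      then have "vs ! 0 = vs ! i" using a i by blast
      then show ?thesis using i assms by simp
    qed
  qed
next
  assume r: "vs = replicate k (vs ! 0)"
  obtain c where c: "vs = replicate k c" using r by blast
  show "\<forall>i j. i < j \<and> j < length vs \<longrightarrow> vs ! i = vs ! j" unfolding c by simp
qed

lemma filter_gwl:
  assumes k: "k \<ge> 1"
  shows "filter_mset (\<lambda>l. isdiag (lbase l)) (gwl k t (X :: ('n::finite,'l::finite) graph)) =
    image_mset (\<lambda>u. wl k t X (replicate k u)) (mset_set UNIV)"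
proof -
  define TU where "TU = {vs :: 'n list. length vs = k}"
  have fTU: "finite TU" unfolding TU_def by (rule finite_tuples)
  have set_eq: "{vs \<in> TU. isdiag (lbase (wl k t X vs))} = range (\<lambda>u::'n. replicate k u)"
  proof
    show "{vs \<in> TU. isdiag (lbase (wl k t X vs))} \<subseteq> range (\<lambda>u::'n. replicate k u)"
    proof
      fix vs assume "vs \<in> {vs \<in> TU. isdiag (lbase (wl k t X vs))}"
      then have "length vs = k" "isdiag (atp X vs)" unfolding TU_def lbase_wl by auto
      then have "vs = replicate k (vs ! 0)" using diag_rep[OF _ k] isdiag_atp by blast
      then show "vs \<in> range (\<lambda>u::'n. replicate k u)" by blast
    qed
    show "range (\<lambda>u::'n. replicate k u) \<subseteq> {vs \<in> TU. isdiag (lbase (wl k t X vs))}"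
    proof
      fix vs assume "vs \<in> range (\<lambda>u::'n. replicate k u)"
      then obtain u where u: "vs = replicate k u" by blast
      then have "isdiag (atp X vs)" unfolding isdiag_atp by simp
      then show "vs \<in> {vs \<in> TU. isdiag (lbase (wl k t X vs))}" unfolding TU_def lbase_wl using u by simp
    qed
  qed
  have inj: "inj (\<lambda>u. replicate k (u :: 'n))" using k by (auto simp: inj_def replicate_eq_replicate)
  have "filter_mset (\<lambda>l. isdiag (lbase l)) (gwl k t X) =
      image_mset (wl k t X) (filter_mset (\<lambda>vs. isdiag (lbase (wl k t X vs))) (mset_set TU))"
    unfolding gwl_def TU_def by (simp add: filter_mset_image_mset)
  also have "\<dots> = image_mset (wl k t X) (mset_set (range (\<lambda>u::'n. replicate k u)))"
    using fTU set_eq by simp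
  also have "\<dots> = image_mset (wl k t X) (image_mset (\<lambda>u::'n. replicate k u) (mset_set UNIV))"
    using image_mset_mset_set[OF inj] by simp
  also have "\<dots> = image_mset (\<lambda>u. wl k t X (replicate k u)) (mset_set UNIV)"
    by (simp add: image_mset.compositionality o_def)
  finally show ?thesis .
qed

lemma closed_inv:
  fixes K :: "(real^'l::finite) set" and G H :: "('n::finite,'l) graph"
  assumes k: "k \<ge> 1" and gG: "is_graph K G" and gH: "is_graph K H" and e: "gwl k t G = gwl k t H"
  shows "vars \<phi> \<subseteq> {1..k+1} \<Longrightarrow> fv \<phi> = {} \<Longrightarrow> sdepth \<phi> \<le> Suc t \<Longrightarrow> sem G \<nu> \<phi> = sem H \<mu> \<phi>"
proof (induction \<phi> arbitrary: \<nu> \<mu>)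
  case (Mul a b)
  have "sem G \<nu> a = sem H \<mu> a" "sem G \<nu> b = sem H \<mu> b"
    using Mul.prems by (intro Mul.IH; simp)+
  then show ?case by simp
next
  case (Add a b)
  have "sem G \<nu> a = sem H \<mu> a" "sem G \<nu> b = sem H \<mu> b"
    using Add.prems by (intro Add.IH; simp)+
  then show ?case by simp
next
  case (Scale c a)
  have "sem G \<nu> a = sem H \<mu> a"
    using Scale.prems by (intro Scale.IH; simp)
  then show ?case by simp
next
  case (App g as)
  have "map (sem G \<nu>) as = map (sem H \<mu>) as"
  proof (rule map_cong[OF refl])
    fix a assume a: "a \<in> set as"
    have "sdepth a \<le> Suc t" using App.prems(3) a by (auto simp: Max_ge_iff)
    moreover have "vars a \<subseteq> {1..k+1}" "fv a = {}" using App.prems(1,2) a by auto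
    ultimately show "sem G \<nu> a = sem H \<mu> a" using App.IH a by blast
  qed
  then show ?case by (simp only: sem.simps)
next
  case (Sum j \<psi>)
  have j: "j \<in> {1..k+1}" and v\<psi>: "vars \<psi> \<subseteq> {1..k+1}" using Sum.prems(1) by auto
  have f\<psi>: "fv \<psi> \<subseteq> {j}" using Sum.prems(2) by auto
  have d\<psi>: "sdepth \<psi> \<le> t" using Sum.prems(3) by simp
  have ms: "image_mset (\<lambda>u. wl k t G (replicate k u)) (mset_set UNIV) = image_mset (\<lambda>u. wl k t H (replicate k u)) (mset_set UNIV)"
    using filter_gwl[OF k, of t G] filter_gwl[OF k, of t H] e by simp
  have c1: "sem G (\<nu>(j := u)) \<psi> = sem G (\<lambda>_. u) \<psi>" for u by (rule sem_fv) (use f\<psi> in auto)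
  have c2: "sem H (\<mu>(j := u)) \<psi> = sem H (\<lambda>_. u) \<psi>" for u by (rule sem_fv) (use f\<psi> in auto)
  have "(\<Sum>u\<in>UNIV. sem G (\<lambda>_. u) \<psi>) = (\<Sum>u\<in>UNIV. sem H (\<lambda>_. u) \<psi>)"
  proof (rule sum_mset_eq[OF _ _ ms])
    fix u u' assume eu: "wl k t G (replicate k u) = wl k t H (replicate k u')"
    have rs: "set (replicate k j) = {j}" using k by simp
    show "sem G (\<lambda>_. u) \<psi> = sem H (\<lambda>_. u') \<psi>"
      by (rule wl_inv[OF k gG gH, of "replicate k j"]) (use eu rs j v\<psi> f\<psi> d\<psi> in auto)
  qed auto
  then show ?case using c1 c2 by simp
qed auto


lemma rho0_gwl_inf: "rho0_sub K (\<lambda>G t. gwl k t G) f = rho0_sub_gwl_inf K k f"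
  unfolding rho0_sub_def rho0_sub_gwl_inf_def by (simp add: fun_eq_iff)

theorem mainTheorem12:
  fixes K :: "(real^'l::finite) set" and t k :: nat
  assumes "compact K" and "k \<ge> 1"
  shows
   "(uclos1 K (rep1 K (GTL2t t) :: (('n::finite,'l) graph \<times> 'n \<Rightarrow> real^'d::finite) set)
      = {f. cont1 K f \<and> rho1_sub K (cr t) f})
   \<and> (uclos1 K (rep1 K (TLt (k+1) t) :: (('n,'l) graph \<times> 'n \<Rightarrow> real^'d) set)
      = {f. cont1 K f \<and> rho1_sub K (vwl k t) f})
   \<and> (uclos0 K (rep0 K (TLt 2 (t+1)) :: (('n,'l) graph \<Rightarrow> real^'d) set)
      = {f. cont0 K f \<and> rho0_sub K (gwl 1 t) f})
   \<and> (uclos0 K (rep0 K (TL (k+1)) :: (('n,'l) graph \<Rightarrow> real^'d) set)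
      = {f. cont0 K f \<and> rho0_sub_gwl_inf K k f})"
proof (intro conjI)
  note Kc = assms(1) and k = assms(2)
  have gtl1: "gtl 1 \<phi>" if h: "\<phi> \<in> GTL2t t" "fv \<phi> \<subseteq> {1}" for \<phi> :: "'l tl"
  proof -
    obtain i where i: "gtl i \<phi>" using h(1) unfolding GTL2t_def GTL2_def by blast
    then have "fv \<phi> = {i}" by (rule gtl_fv)
    then have "i = 1" using h(2) by auto
    then show ?thesis using i by simp
  qed
  show "uclos1 K (rep1 K (GTL2t t) :: (('n,'l) graph \<times> 'n \<Rightarrow> real^'d) set) = {f. cont1 K f \<and> rho1_sub K (cr t) f}"
  proof (rule main1[OF Kc])
    have "gtl 1 (EqI 1 1 :: 'l tl)" by (rule g_eq) simp
    then show "(EqI 1 1 :: 'l tl) \<in> GTL2t t" unfolding GTL2t_def GTL2_def by (auto intro: exI[of _ 1])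
  next
    fix g and as :: "'l tl list"
    assume ne: "as \<noteq> []" and ca: "cont_arity (length as) g" and all: "\<forall>a\<in>set as. a \<in> GTL2t t \<and> fv a \<subseteq> {1}"
    have "gtl 1 (App g as)" using ne all gtl1 by (intro g_app) auto
    moreover have "omega_ok (App g as)" using ne ca all unfolding GTL2t_def GTL2_def by auto
    moreover have "sdepth (App g as) \<le> t" using all unfolding GTL2t_def by (intro sdepth_App_le) auto
    ultimately show "App g as \<in> GTL2t t" unfolding GTL2t_def GTL2_def by blast
  next
    fix \<phi> :: "'l tl" assume "\<phi> \<in> GTL2t t" then show "omega_ok \<phi>" unfolding GTL2t_def GTL2_def by auto
  next
    fix \<phi> :: "'l tl" and G H :: "('n,'l) graph" and v w
    assume a: "\<phi> \<in> GTL2t t" "fv \<phi> \<subseteq> {1}" "is_graph K G" "is_graph K H" "cr t G v = cr t H w"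
    have g: "gtl 1 \<phi>" using gtl1 a(1,2) by blast
    have d: "sdepth \<phi> \<le> t" using a(1) unfolding GTL2t_def by blast
    show "sem G (\<lambda>_. v) \<phi> = sem H (\<lambda>_. w) \<phi>"
      by (rule gtl_inv[OF a(3) a(4) g d]) (simp add: a(5))
  next
    fix G H :: "('n,'l) graph" and v w
    assume a: "is_graph K G" "is_graph K H" "cr t G v \<noteq> cr t H w"
    obtain \<phi> where \<phi>: "gtl 1 \<phi>" "omega_ok \<phi>" "sdepth \<phi> \<le> t" "sem G (\<lambda>_. v) \<phi> \<noteq> sem H (\<lambda>_. w) \<phi>"
      using gtl_sep[of K t, rule_format, OF a(1) a(2) a(3)] by blast
    then have "\<phi> \<in> GTL2t t" "fv \<phi> \<subseteq> {1}" unfolding GTL2t_def GTL2_def using gtl_fv by auto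
    then show "\<exists>\<phi>\<in>GTL2t t. fv \<phi> \<subseteq> {1} \<and> sem G (\<lambda>_. v) \<phi> \<noteq> sem H (\<lambda>_. w) \<phi>" using \<phi>(4) by blast
  qed
  show "uclos1 K (rep1 K (TLt (k+1) t) :: (('n,'l) graph \<times> 'n \<Rightarrow> real^'d) set) = {f. cont1 K f \<and> rho1_sub K (vwl k t) f}"
  proof (rule main1[OF Kc])
    show "(EqI 1 1 :: 'l tl) \<in> TLt (k+1) t" unfolding TLt_def TL_def by auto
  next
    fix g and as :: "'l tl list"
    assume ne: "as \<noteq> []" and ca: "cont_arity (length as) g" and all: "\<forall>a\<in>set as. a \<in> TLt (k+1) t \<and> fv a \<subseteq> {1}"
    have "sdepth (App g as) \<le> t" using all unfolding TLt_def by (intro sdepth_App_le) auto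
    then show "App g as \<in> TLt (k+1) t" using ne ca all unfolding TLt_def TL_def by auto
  next
    fix \<phi> :: "'l tl" assume "\<phi> \<in> TLt (k+1) t" then show "omega_ok \<phi>" unfolding TLt_def TL_def by auto
  next
    fix \<phi> :: "'l tl" and G H :: "('n,'l) graph" and v w
    assume a: "\<phi> \<in> TLt (k+1) t" "fv \<phi> \<subseteq> {1}" "is_graph K G" "is_graph K H" "vwl k t G v = vwl k t H w"
    have rs: "set (replicate k (1::nat)) = {1}" using k by simp
    show "sem G (\<lambda>_. v) \<phi> = sem H (\<lambda>_. w) \<phi>"
      by (rule wl_inv[OF k a(3,4), of "replicate k 1"]) (use a rs in \<open>auto simp: TLt_def TL_def vwl_def\<close>)
  next
    fix G H :: "('n,'l) graph" and v w
    assume a: "is_graph K G" "is_graph K H" "vwl k t G v \<noteq> vwl k t H w"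
    have rs: "set (replicate k (1::nat)) = {1}" using k by simp
    have nw: "wl k t G (map (\<lambda>_. v) (replicate k 1)) \<noteq> wl k t H (map (\<lambda>_. w) (replicate k 1))"
      using a(3) unfolding vwl_def by simp
    obtain \<phi> where \<phi>: "vars \<phi> \<subseteq> {1..k+1}" "omega_ok \<phi>" "fv \<phi> \<subseteq> set (replicate k 1)" "sdepth \<phi> \<le> t"
      "sem G (\<lambda>_. v) \<phi> \<noteq> sem H (\<lambda>_. w) \<phi>"
      using wl_sep[OF k, of K t, rule_format, OF a(1) a(2) _ _ nw] rs by auto
    then show "\<exists>\<phi>\<in>TLt (k+1) t. fv \<phi> \<subseteq> {1} \<and> sem G (\<lambda>_. v) \<phi> \<noteq> sem H (\<lambda>_. w) \<phi>"
      unfolding TLt_def TL_def using rs by auto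
  qed
  show "uclos0 K (rep0 K (TLt 2 (t+1)) :: (('n,'l) graph \<Rightarrow> real^'d) set) = {f. cont0 K f \<and> rho0_sub K (gwl 1 t) f}"
  proof (rule main0[OF Kc])
    show "(Sum 1 (EqI 1 1) :: 'l tl) \<in> TLt 2 (t+1)" unfolding TLt_def TL_def by auto
    show "fv (Sum 1 (EqI 1 1) :: 'l tl) = {}" by simp
  next
    fix g and as :: "'l tl list"
    assume ne: "as \<noteq> []" and ca: "cont_arity (length as) g" and all: "\<forall>a\<in>set as. a \<in> TLt 2 (t+1) \<and> fv a = {}"
    have "sdepth (App g as) \<le> t+1" using all unfolding TLt_def by (intro sdepth_App_le) auto
    then show "App g as \<in> TLt 2 (t+1)" using ne ca all unfolding TLt_def TL_def by auto
  next
    fix \<phi> :: "'l tl" assume "\<phi> \<in> TLt 2 (t+1)" then show "omega_ok \<phi>" unfolding TLt_def TL_def by auto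
  next
    fix \<phi> :: "'l tl" and G H :: "('n,'l) graph"
    assume a: "\<phi> \<in> TLt 2 (t+1)" "fv \<phi> = {}" "is_graph K G" "is_graph K H" "gwl 1 t G = gwl 1 t H"
    show "sem G (\<lambda>_. undefined) \<phi> = sem H (\<lambda>_. undefined) \<phi>"
      by (rule closed_inv[of 1 K G H t]) (use a in \<open>auto simp: TLt_def TL_def numeral_2_eq_2\<close>)
  next
    fix G H :: "('n,'l) graph"
    assume a: "is_graph K G" "is_graph K H" "gwl 1 t G \<noteq> gwl 1 t H"
    obtain \<phi> where \<phi>: "vars \<phi> \<subseteq> {1..1+1}" "omega_ok \<phi>" "fv \<phi> = {}" "sdepth \<phi> \<le> t + 1"
      "sem G (\<lambda>_. undefined) \<phi> \<noteq> sem H (\<lambda>_. undefined) \<phi>"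
      using gwl_sep[of 1 K G H t "\<lambda>_. undefined" "\<lambda>_. undefined"] a by auto
    then show "\<exists>\<phi>\<in>TLt 2 (t+1). fv \<phi> = {} \<and> sem G (\<lambda>_. undefined) \<phi> \<noteq> sem H (\<lambda>_. undefined) \<phi>"
      unfolding TLt_def TL_def by (auto simp: numeral_2_eq_2)
  qed
  have "uclos0 K (rep0 K (TL (k+1)) :: (('n,'l) graph \<Rightarrow> real^'d) set) = {f. cont0 K f \<and> rho0_sub K (\<lambda>G t. gwl k t G) f}"
  proof (rule main0[OF Kc])
    show "(Sum 1 (EqI 1 1) :: 'l tl) \<in> TL (k+1)" unfolding TL_def by auto
    show "fv (Sum 1 (EqI 1 1) :: 'l tl) = {}" by simp
  next
    fix g and as :: "'l tl list"
    assume ne: "as \<noteq> []" and ca: "cont_arity (length as) g" and all: "\<forall>a\<in>set as. a \<in> TL (k+1) \<and> fv a = {}"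
    then show "App g as \<in> TL (k+1)" unfolding TL_def by auto
  next
    fix \<phi> :: "'l tl" assume "\<phi> \<in> TL (k+1)" then show "omega_ok \<phi>" unfolding TL_def by auto
  next
    fix \<phi> :: "'l tl" and G H :: "('n,'l) graph"
    assume a: "\<phi> \<in> TL (k+1)" "fv \<phi> = {}" "is_graph K G" "is_graph K H" "(\<lambda>t. gwl k t G) = (\<lambda>t. gwl k t H)"
    have e: "gwl k (sdepth \<phi>) G = gwl k (sdepth \<phi>) H" using fun_cong[OF a(5), of "sdepth \<phi>"] by simp
    show "sem G (\<lambda>_. undefined) \<phi> = sem H (\<lambda>_. undefined) \<phi>"
      by (rule closed_inv[OF k a(3,4) e]) (use a in \<open>auto simp: TL_def\<close>)
  next
    fix G H :: "('n,'l) graph"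
    assume a: "is_graph K G" "is_graph K H" "(\<lambda>t. gwl k t G) \<noteq> (\<lambda>t. gwl k t H)"
    then obtain t' where t': "gwl k t' G \<noteq> gwl k t' H" by (auto simp: fun_eq_iff)
    obtain \<phi> where \<phi>: "vars \<phi> \<subseteq> {1..k+1}" "omega_ok \<phi>" "fv \<phi> = {}"
      "sem G (\<lambda>_. undefined) \<phi> \<noteq> sem H (\<lambda>_. undefined) \<phi>"
      using gwl_sep[OF k a(1,2) t', of "\<lambda>_. undefined" "\<lambda>_. undefined"] by auto
    then show "\<exists>\<phi>\<in>TL (k+1). fv \<phi> = {} \<and> sem G (\<lambda>_. undefined) \<phi> \<noteq> sem H (\<lambda>_. undefined) \<phi>"
      unfolding TL_def by auto
  qed
  then show "uclos0 K (rep0 K (TL (k+1)) :: (('n,'l) graph \<Rightarrow> real^'d) set) = {f. cont0 K f \<and> rho0_sub_gwl_inf K k f}"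
    by (simp add: rho0_gwl_inf)
qed


end
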